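(* Consider the network system of the context and assume every subsystem $G_i\in\mathcal{RH}_\infty$. Then the entire network system (subsystems $G_1,\dots,G_N$, interaction $\boldsymbol v=\boldsymbol L\boldsymbol w$, decentralized controller $u_i=K_iy_i$) is internally stable for every interaction $\boldsymbol L$ such that the preexisting system $\boldsymbol G_{\rm pre}$ is internally stable if and only if each $K_i$, $i=1,\dots,N$, is a retrofit controller for $G_i$, i.e. (equivalently) $K_i=(I+Q_iG_{y_iu_i})^{-1}Q_i$ for some $Q_i\in\mathcal{RH}_\infty$ with $G_{w_iu_i}Q_iG_{y_iv_i}=0$.
   Context: For $i=1,\dots,N$, subsystem $G_i$ is a proper real rational transfer matrix with inputs $(v_i,d_i,u_i)$ and outputs $(w_i,z_i,y_i)$, $G_{a_ib_i}$ denoting the block from $b_i$ to $a_i$. Stacked signals $\boldsymbol v=\mathrm{col}(v_1,\dots,v_N)$ etc.; the interaction is $\boldsymbol v=\boldsymbol L\boldsymbol w$ with $\boldsymbol L=[L_{ij}]$ an arbitrary proper real rational (possibly dynamic) transfer matrix; the decentralized controller is $\boldsymbol u=\boldsymbol K\boldsymbol y$, $\boldsymbol K=\mathrm{diag}(K_1,\dots,K_N)$. Let $\boldsymbol G_{\boldsymbol{wv}}:=\mathrm{diag}(G_{w_iv_i})$ and similarly for other blocks. The preexisting system $\boldsymbol G_{\rm pre}$ is the loop $\boldsymbol w=\boldsymbol G_{\boldsymbol{wv}}\boldsymbol v$, $\boldsymbol v=\boldsymbol L\boldsymbol w$. All feedback systems are well-posed; internal stability is standard. $\mathcal{RH}_\infty$: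 stable proper real rational transfer matrices. For a single subsystem $G$ (inputs $v,d,u$; outputs $w,z,y$), a controller $u=Ky$ is a retrofit controller if the feedback system of $G$, $u=Ky$, and $v=\overline{G}w$ is internally stable for every proper real rational $\overline{G}$ such that the loop $w=G_{wv}v$, $v=\overline{G}w$ is internally stable. *)

theory Defs
  imports "HOL-Computational_Algebra.Polynomial" "HOL-Computational_Algebra.Fraction_Field"
    "Jordan_Normal_Form.Matrix"
begin

text \<open>Real rational transfer functions in the Laplace variable s: the fraction field of real
  polynomials. Transfer matrices are Jordan_Normal_Form matrices over this field.\<close>

type_synonym tf = "real poly fract"

definition proper_tf :: "tf \<Rightarrow> bool" where
  "proper_tf r \<longleftrightarrow> (\<exists>p q. q \<noteq> 0 \<and> r = Fract p q \<and> degree p \<le> degree q)"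

text \<open>Membership in RH-infinity (continuous time): proper, all poles in the open left half-plane.\<close>
definition stable_tf :: "tf \<Rightarrow> bool" where
  "stable_tf r \<longleftrightarrow> (\<exists>p q. q \<noteq> 0 \<and> r = Fract p q \<and> degree p \<le> degree q \<and>
      (\<forall>z::complex. poly (map_poly complex_of_real q) z = 0 \<longrightarrow> Re z < 0))"

definition proper_mat :: "tf mat \<Rightarrow> bool" where
  "proper_mat A \<longleftrightarrow> (\<forall>i<dim_row A. \<forall>j<dim_col A. proper_tf (A $$ (i,j)))"

definition RH_inf :: "tf mat \<Rightarrow> bool" where
  "RH_inf A \<longleftrightarrow> (\<forall>i<dim_row A. \<forall>j<dim_col A. stable_tf (A $$ (i,j)))"

definition append_cols_mat :: "tf mat \<Rightarrow> tf mat \<Rightarrow> tf mat" where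
  "append_cols_mat A B = four_block_mat A B (0\<^sub>m 0 (dim_col A)) (0\<^sub>m 0 (dim_col B))"

definition blk :: "tf mat \<Rightarrow> nat \<Rightarrow> nat \<Rightarrow> nat \<Rightarrow> nat \<Rightarrow> tf mat" where
  "blk G r0 nr c0 nc = mat nr nc (\<lambda>(i,j). G $$ (r0 + i, c0 + j))"

fun diag_mats :: "nat \<Rightarrow> (nat \<Rightarrow> tf mat) \<Rightarrow> tf mat" where
  "diag_mats 0 f = 0\<^sub>m 0 0"
| "diag_mats (Suc n) f = (let A = diag_mats n f in
     four_block_mat A (0\<^sub>m (dim_row A) (dim_col (f n))) (0\<^sub>m (dim_row (f n)) (dim_col A)) (f n))"

text \<open>Internal stability of the feedback loop  b = M a + e2,  a = F b + e1  (M: nb x na,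
  F: na x nb): well-posed (the loop matrix is invertible over the rational functions) and
  the closed-loop map from (e1,e2) to (a,b) is in RH-infinity.\<close>
definition fb_stable :: "tf mat \<Rightarrow> tf mat \<Rightarrow> bool" where
  "fb_stable M F \<longleftrightarrow> (let na = dim_col M; nb = dim_row M;
      M0 = four_block_mat (1\<^sub>m na) (- F) (- M) (1\<^sub>m nb) in
      \<exists>T. T \<in> carrier_mat (na + nb) (na + nb) \<and> T * M0 = 1\<^sub>m (na + nb) \<and>
          M0 * T = 1\<^sub>m (na + nb) \<and> RH_inf T)"

text \<open>Internal stability of a plant with loop inputs a, exogenous inputs d, loop outputs b,
  exogenous outputs z:  b = Pba a + Pbd d + e2,  z = Pza a + Pzd d,  a = F b + e1.
  Well-posed and all transfer matrices from (e1,e2,d) to (a,b,z) in RH-infinity.\<close>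
definition int_stable :: "tf mat \<Rightarrow> tf mat \<Rightarrow> tf mat \<Rightarrow> tf mat \<Rightarrow> tf mat \<Rightarrow> bool" where
  "int_stable Pba Pbd Pza Pzd F \<longleftrightarrow> (let na = dim_col Pba; nb = dim_row Pba;
      nd = dim_col Pbd; nz = dim_row Pza;
      M0 = four_block_mat (1\<^sub>m na) (- F) (- Pba) (1\<^sub>m nb);
      E = (0\<^sub>m na nd) @\<^sub>r Pbd;
      Z = append_cols_mat Pza (0\<^sub>m nz nb) in
      \<exists>T. T \<in> carrier_mat (na + nb) (na + nb) \<and> T * M0 = 1\<^sub>m (na + nb) \<and>
          M0 * T = 1\<^sub>m (na + nb) \<and>
          RH_inf T \<and> RH_inf (T * E) \<and> RH_inf (Z * T) \<and> RH_inf (Z * T * E + Pzd))"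

text \<open>Plant given by its nine blocks (inputs (v,d,u), outputs (w,z,y)), closed by
  v = Lm w and u = Km y.\<close>
definition plant_loop_stable ::
  "tf mat \<Rightarrow> tf mat \<Rightarrow> tf mat \<Rightarrow> tf mat \<Rightarrow> tf mat \<Rightarrow> tf mat \<Rightarrow> tf mat \<Rightarrow> tf mat \<Rightarrow> tf mat
   \<Rightarrow> tf mat \<Rightarrow> tf mat \<Rightarrow> bool" where
  "plant_loop_stable Gwv Gwd Gwu Gzv Gzd Gzu Gyv Gyd Gyu Lm Km \<longleftrightarrow>
     int_stable (four_block_mat Gwv Gwu Gyv Gyu) (Gwd @\<^sub>r Gyd) (append_cols_mat Gzv Gzu) Gzd
       (four_block_mat Lm (0\<^sub>m (dim_row Lm) (dim_col Km)) (0\<^sub>m (dim_row Km) (dim_col Lm)) Km)"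

definition Gwv where "Gwv nw nz ny nv nd nu G = blk G 0 nw 0 nv"
definition Gwd where "Gwd nw nz ny nv nd nu G = blk G 0 nw nv nd"
definition Gwu where "Gwu nw nz ny nv nd nu G = blk G 0 nw (nv + nd) nu"
definition Gzv where "Gzv nw nz ny nv nd nu G = blk G nw nz 0 nv"
definition Gzd where "Gzd nw nz ny nv nd nu G = blk G nw nz nv nd"
definition Gzu where "Gzu nw nz ny nv nd nu G = blk G nw nz (nv + nd) nu"
definition Gyv where "Gyv nw nz ny nv nd nu G = blk G (nw + nz) ny 0 nv"
definition Gyd where "Gyd nw nz ny nv nd nu G = blk G (nw + nz) ny nv nd"
definition Gyu where "Gyu nw nz ny nv nd nu G = blk G (nw + nz) ny (nv + nd) nu"

definition retrofit :: "nat \<Rightarrow> nat \<Rightarrow> nat \<Rightarrow> nat \<Rightarrow> nat \<Rightarrow> nat \<Rightarrow> tf mat \<Rightarrow> tf mat \<Rightarrow> bool" where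
  "retrofit nw nz ny nv nd nu G K \<longleftrightarrow>
    (\<forall>Gbar. Gbar \<in> carrier_mat nv nw \<and> proper_mat Gbar \<and> fb_stable (Gwv nw nz ny nv nd nu G) Gbar
       \<longrightarrow> plant_loop_stable (Gwv nw nz ny nv nd nu G) (Gwd nw nz ny nv nd nu G)
             (Gwu nw nz ny nv nd nu G) (Gzv nw nz ny nv nd nu G) (Gzd nw nz ny nv nd nu G)
             (Gzu nw nz ny nv nd nu G) (Gyv nw nz ny nv nd nu G) (Gyd nw nz ny nv nd nu G)
             (Gyu nw nz ny nv nd nu G) Gbar K)"

definition diagG where
  "diagG N nw nz ny nv nd nu G B =
     diag_mats N (\<lambda>i. B (nw i) (nz i) (ny i) (nv i) (nd i) (nu i) (G i))"

definition network_stable ::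
  "nat \<Rightarrow> (nat \<Rightarrow> nat) \<Rightarrow> (nat \<Rightarrow> nat) \<Rightarrow> (nat \<Rightarrow> nat) \<Rightarrow> (nat \<Rightarrow> nat) \<Rightarrow> (nat \<Rightarrow> nat)
   \<Rightarrow> (nat \<Rightarrow> nat) \<Rightarrow> (nat \<Rightarrow> tf mat) \<Rightarrow> (nat \<Rightarrow> tf mat) \<Rightarrow> tf mat \<Rightarrow> bool" where
  "network_stable N nw nz ny nv nd nu G K L \<longleftrightarrow>
     plant_loop_stable (diagG N nw nz ny nv nd nu G Gwv) (diagG N nw nz ny nv nd nu G Gwd)
       (diagG N nw nz ny nv nd nu G Gwu) (diagG N nw nz ny nv nd nu G Gzv)
       (diagG N nw nz ny nv nd nu G Gzd) (diagG N nw nz ny nv nd nu G Gzu)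
       (diagG N nw nz ny nv nd nu G Gyv) (diagG N nw nz ny nv nd nu G Gyd)
       (diagG N nw nz ny nv nd nu G Gyu) L (diag_mats N K)"

text \<open>Preexisting system: w = Gwv v, v = L w.\<close>
definition pre_stable ::
  "nat \<Rightarrow> (nat \<Rightarrow> nat) \<Rightarrow> (nat \<Rightarrow> nat) \<Rightarrow> (nat \<Rightarrow> nat) \<Rightarrow> (nat \<Rightarrow> nat) \<Rightarrow> (nat \<Rightarrow> nat)
   \<Rightarrow> (nat \<Rightarrow> nat) \<Rightarrow> (nat \<Rightarrow> tf mat) \<Rightarrow> tf mat \<Rightarrow> bool" where
  "pre_stable N nw nz ny nv nd nu G L \<longleftrightarrow> fb_stable (diagG N nw nz ny nv nd nu G Gwv) L"

end

theory Submission
  imports Defs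
begin


lemma poly_of_real_map: "poly (map_poly of_real p) (of_real x :: complex) = of_real (poly p x)"
  by (induction p) (auto simp: map_poly_pCons)

lemma map_poly_of_real_add: "map_poly (of_real :: real \<Rightarrow> complex) (p + q) = map_poly of_real p + map_poly of_real q"
  by (rule poly_eqI) (simp add: coeff_map_poly)

lemma map_poly_of_real_mult: "map_poly (of_real :: real \<Rightarrow> complex) (p * q) = map_poly of_real p * map_poly of_real q"
proof (induction p)
  case 0 then show ?case by simp
next
  case (pCons a p)
  have "pCons a p * q = Polynomial.smult a q + pCons 0 (p * q)" by simp
  then show ?case using pCons by (simp add: map_poly_of_real_add map_poly_smult map_poly_pCons)
qed

lemma stable_tf_0[simp]: "stable_tf 0"
  unfolding stable_tf_def by (rule exI[of _ 0], rule exI[of _ 1]) (auto simp: Zero_fract_def)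

lemma stable_tf_1[simp]: "stable_tf 1"
  unfolding stable_tf_def by (rule exI[of _ 1], rule exI[of _ 1]) (auto simp: One_fract_def)

lemma stable_tf_add[intro]:
  assumes "stable_tf a" "stable_tf b" shows "stable_tf (a + b)"
proof -
  from assms obtain p q p' q' where a: "q \<noteq> 0" "a = Fract p q" "degree p \<le> degree q"
    "\<forall>z::complex. poly (map_poly complex_of_real q) z = 0 \<longrightarrow> Re z < 0"
    and b: "q' \<noteq> 0" "b = Fract p' q'" "degree p' \<le> degree q'"
    "\<forall>z::complex. poly (map_poly complex_of_real q') z = 0 \<longrightarrow> Re z < 0"
    unfolding stable_tf_def by metis
  have "a + b = Fract (p * q' + p' * q) (q * q')" using a b by simp
  moreover have "degree (p * q' + p' * q) \<le> degree (q * q')"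
  proof -
    have "degree (p * q') \<le> degree p + degree q'" by (rule degree_mult_le)
    moreover have "degree (p' * q) \<le> degree p' + degree q" by (rule degree_mult_le)
    ultimately show ?thesis using a b degree_add_le[of "p*q'" "degree q + degree q'" "p'*q"]
      by (simp add: degree_mult_eq)
  qed
  moreover have "\<forall>z::complex. poly (map_poly complex_of_real (q * q')) z = 0 \<longrightarrow> Re z < 0"
    using a b by (simp add: map_poly_of_real_mult)
  ultimately show ?thesis unfolding stable_tf_def using a b by (intro exI[of _ "p * q' + p' * q"] exI[of _ "q*q'"]) auto
qed

lemma stable_tf_mult[intro]:
  assumes "stable_tf a" "stable_tf b" shows "stable_tf (a * b)"
proof -
  from assms obtain p q p' q' where a: "q \<noteq> 0" "a = Fract p q" "degree p \<le> degree q"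
    "\<forall>z::complex. poly (map_poly complex_of_real q) z = 0 \<longrightarrow> Re z < 0"
    and b: "q' \<noteq> 0" "b = Fract p' q'" "degree p' \<le> degree q'"
    "\<forall>z::complex. poly (map_poly complex_of_real q') z = 0 \<longrightarrow> Re z < 0"
    unfolding stable_tf_def by metis
  have "a * b = Fract (p * p') (q * q')" using a b by simp
  moreover have "degree (p * p') \<le> degree (q * q')"
    using degree_mult_le[of p p'] a b by (simp add: degree_mult_eq)
  moreover have "\<forall>z::complex. poly (map_poly complex_of_real (q * q')) z = 0 \<longrightarrow> Re z < 0"
    using a b by (simp add: map_poly_of_real_mult)
  ultimately show ?thesis unfolding stable_tf_def using a b by (intro exI[of _ "p * p'"] exI[of _ "q*q'"]) auto
qed

lemma stable_tf_uminus[intro]: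
  assumes "stable_tf a" shows "stable_tf (- a)"
proof -
  from assms obtain p q where a: "q \<noteq> 0" "a = Fract p q" "degree p \<le> degree q"
    "\<forall>z::complex. poly (map_poly complex_of_real q) z = 0 \<longrightarrow> Re z < 0"
    unfolding stable_tf_def by metis
  show ?thesis unfolding stable_tf_def using a by (intro exI[of _ "- p"] exI[of _ q]) auto
qed

lemma stable_tf_diff[intro]: "stable_tf a \<Longrightarrow> stable_tf b \<Longrightarrow> stable_tf (a - b)"
  by (metis stable_tf_add stable_tf_uminus diff_conv_add_uminus)

lemma stable_tf_sum[intro]: "(\<And>i. i \<in> A \<Longrightarrow> stable_tf (f i)) \<Longrightarrow> stable_tf (sum f A)"
  by (induction A rule: infinite_finite_induct) auto

lemma stable_imp_proper: "stable_tf a \<Longrightarrow> proper_tf a"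
  unfolding stable_tf_def proper_tf_def by blast


lemma RH_infI: "(\<And>i j. i < dim_row A \<Longrightarrow> j < dim_col A \<Longrightarrow> stable_tf (A $$ (i,j))) \<Longrightarrow> RH_inf A"
  unfolding RH_inf_def by auto
lemma RH_infD: "RH_inf A \<Longrightarrow> i < dim_row A \<Longrightarrow> j < dim_col A \<Longrightarrow> stable_tf (A $$ (i,j))"
  unfolding RH_inf_def by auto

lemma RH_inf_mult[intro]: assumes "RH_inf A" "RH_inf B" "dim_col A = dim_row B" shows "RH_inf (A * B)"
proof (rule RH_infI)
  fix i j assume ij: "i < dim_row (A * B)" "j < dim_col (A * B)"
  have "(A * B) $$ (i,j) = (\<Sum>k<dim_col A. A $$ (i,k) * B $$ (k,j))"
    using ij assms(3) by (simp add: scalar_prod_def atLeast0LessThan)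
  also have "stable_tf \<dots>" using ij assms by (auto intro!: stable_tf_sum stable_tf_mult RH_infD)
  finally show "stable_tf ((A * B) $$ (i,j))" .
qed

lemma RH_inf_add[intro]: "RH_inf A \<Longrightarrow> RH_inf B \<Longrightarrow> dim_row A = dim_row B \<Longrightarrow> dim_col A = dim_col B \<Longrightarrow> RH_inf (A + B)"
  by (rule RH_infI) (simp add: RH_infD stable_tf_add)
lemma RH_inf_uminus[intro]: "RH_inf A \<Longrightarrow> RH_inf (- A)"
  by (rule RH_infI) (auto dest: RH_infD)
lemma RH_inf_minus[intro]: "RH_inf A \<Longrightarrow> RH_inf B \<Longrightarrow> dim_row A = dim_row B \<Longrightarrow> dim_col A = dim_col B \<Longrightarrow> RH_inf (A - B)"
  by (rule RH_infI) (simp add: RH_infD stable_tf_diff)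
lemma RH_inf_zero[simp]: "RH_inf (0\<^sub>m n m)"
  by (rule RH_infI) auto
lemma RH_inf_one[simp]: "RH_inf (1\<^sub>m n)"
  by (rule RH_infI) auto
lemma RH_inf_four_block: "RH_inf (four_block_mat A B C D) \<longleftrightarrow> RH_inf A \<and> RH_inf B \<and> RH_inf C \<and> RH_inf D"
  if "dim_row A = dim_row B" "dim_col A = dim_col C" "dim_row C = dim_row D" "dim_col B = dim_col D"
proof
  assume H: "RH_inf (four_block_mat A B C D)"
  show "RH_inf A \<and> RH_inf B \<and> RH_inf C \<and> RH_inf D"
  proof (intro conjI RH_infI)
    fix i j assume "i < dim_row A" "j < dim_col A"
    then show "stable_tf (A $$ (i,j))" using RH_infD[OF H, of i j] that by simp
  next
    fix i j assume "i < dim_row B" "j < dim_col B"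
    then show "stable_tf (B $$ (i,j))" using RH_infD[OF H, of i "j + dim_col A"] that by simp
  next
    fix i j assume "i < dim_row C" "j < dim_col C"
    then show "stable_tf (C $$ (i,j))" using RH_infD[OF H, of "i + dim_row A" j] that by simp
  next
    fix i j assume "i < dim_row D" "j < dim_col D"
    then show "stable_tf (D $$ (i,j))" using RH_infD[OF H, of "i + dim_row A" "j + dim_col A"] that by simp
  qed
next
  assume "RH_inf A \<and> RH_inf B \<and> RH_inf C \<and> RH_inf D"
  then show "RH_inf (four_block_mat A B C D)"
    by (intro RH_infI) (auto simp: that intro: RH_infD)
qed

lemma RH_inf_blk: "RH_inf G \<Longrightarrow> r0 + nr \<le> dim_row G \<Longrightarrow> c0 + nc \<le> dim_col G \<Longrightarrow> RH_inf (blk G r0 nr c0 nc)"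
  unfolding blk_def by (rule RH_infI) (auto intro: RH_infD)

lemma blk_carrier[simp]: "blk G r0 nr c0 nc \<in> carrier_mat nr nc"
  unfolding blk_def by auto



lemma mad_assoc: assumes "dim_col A = dim_row B" "dim_col B = dim_row C" shows "(A::tf mat) * B * C = A * (B * C)"
proof -
  have a: "A \<in> carrier_mat (dim_row A) (dim_col A)" "B \<in> carrier_mat (dim_col A) (dim_col B)" "C \<in> carrier_mat (dim_col B) (dim_col C)"
    using assms unfolding carrier_mat_def by auto
  show ?thesis by (rule assoc_mult_mat[OF a])
qed
lemma mad_distl: assumes "dim_col A = dim_row B" "dim_row B = dim_row C" "dim_col B = dim_col C" shows "(A::tf mat) * (B + C) = A * B + A * C"
proof -
  have a: "A \<in> carrier_mat (dim_row A) (dim_col A)" "B \<in> carrier_mat (dim_col A) (dim_col B)" "C \<in> carrier_mat (dim_col A) (dim_col B)"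
    using assms unfolding carrier_mat_def by auto
  show ?thesis by (rule mult_add_distrib_mat[OF a])
qed
lemma mad_distr: assumes "dim_row A = dim_row B" "dim_col A = dim_col B" "dim_col A = dim_row C" shows "((A::tf mat) + B) * C = A * C + B * C"
proof -
  have a: "A \<in> carrier_mat (dim_row A) (dim_col A)" "B \<in> carrier_mat (dim_row A) (dim_col A)" "C \<in> carrier_mat (dim_col A) (dim_col C)"
    using assms unfolding carrier_mat_def by auto
  show ?thesis by (rule add_mult_distrib_mat[OF a])
qed
lemma mad_add_assoc: assumes "dim_row A = dim_row B" "dim_col A = dim_col B" "dim_row B = dim_row C" "dim_col B = dim_col C" shows "((A::tf mat) + B) + C = A + (B + C)"
proof -
  have a: "A \<in> carrier_mat (dim_row A) (dim_col A)" "B \<in> carrier_mat (dim_row A) (dim_col A)" "C \<in> carrier_mat (dim_row A) (dim_col A)"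
    using assms unfolding carrier_mat_def by auto
  show ?thesis by (rule assoc_add_mat[OF a])
qed
lemma mad_add_comm: assumes "dim_row A = dim_row B" "dim_col A = dim_col B" shows "(A::tf mat) + B = B + A"
proof -
  have a: "A \<in> carrier_mat (dim_row A) (dim_col A)" "B \<in> carrier_mat (dim_row A) (dim_col A)"
    using assms unfolding carrier_mat_def by auto
  show ?thesis by (rule comm_add_mat[OF a])
qed
lemma mad_add_lcomm: assumes "dim_row A = dim_row B" "dim_col A = dim_col B" "dim_row B = dim_row C" "dim_col B = dim_col C" shows "(A::tf mat) + (B + C) = B + (A + C)"
proof -
  have "A + (B + C) = (A + B) + C" using mad_add_assoc assms by simp
  also have "A + B = B + A" using mad_add_comm assms by simp
  also have "(B + A) + C = B + (A + C)" using mad_add_assoc assms by simp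
  finally show ?thesis .
qed

lemma mad_neg_add: "dim_row A = dim_row B \<Longrightarrow> dim_col A = dim_col B \<Longrightarrow> - ((A::tf mat) + B) = - A + - B"
  by (rule eq_matI) auto
lemma mad_cancel1: "dim_row A = dim_row B \<Longrightarrow> dim_col A = dim_col B \<Longrightarrow> (A::tf mat) + (- A + B) = B"
  by (rule eq_matI) auto
lemma mad_cancel2: "dim_row A = dim_row B \<Longrightarrow> dim_col A = dim_col B \<Longrightarrow> - (A::tf mat) + (A + B) = B"
  by (rule eq_matI) auto
lemma mad_cancel3: "(A::tf mat) + - A = 0\<^sub>m (dim_row A) (dim_col A)"
  by (rule eq_matI) auto
lemma mad_cancel4: "- (A::tf mat) + A = 0\<^sub>m (dim_row A) (dim_col A)"
  by (rule eq_matI) auto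
lemma mad_zero1: "dim_row A = n \<Longrightarrow> dim_col A = m \<Longrightarrow> (A::tf mat) + 0\<^sub>m n m = A"
  by (rule eq_matI) auto
lemma mad_zero2: "dim_row A = n \<Longrightarrow> dim_col A = m \<Longrightarrow> 0\<^sub>m n m + (A::tf mat) = A"
  by (rule eq_matI) auto
lemma mad_neg_zero: "- 0\<^sub>m n m = (0\<^sub>m n m :: tf mat)"
  by (rule eq_matI) auto

lemmas mad = mad_assoc mad_distl mad_distr mad_add_assoc
lemmas madc = mad mad_add_comm mad_add_lcomm mad_neg_add mad_cancel1 mad_cancel2 mad_cancel3 mad_cancel4 mad_zero1 mad_zero2 mad_neg_zero
lemma test:
  fixes K D Q C L :: "tf mat"
  assumes c: "K \<in> carrier_mat nu ny" "D \<in> carrier_mat ny nu" "Q \<in> carrier_mat nu ny" "C \<in> carrier_mat ny nv" "L \<in> carrier_mat nv nw"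
  and eq: "Q = K + K * D * Q"
  shows "Q * C * L = K * C * L + K * D * (Q * C * L)"
proof -
  have "Q * C * L = (K + K * D * Q) * C * L" using eq by simp
  also have "\<dots> = K * C * L + K * D * (Q * C * L)"
    using c by (simp add: mad)
  finally show ?thesis .
qed

lemma test2:
  fixes K D Q C L :: "tf mat"
  assumes c: "K \<in> carrier_mat n n" "D \<in> carrier_mat n n" "Q \<in> carrier_mat n n" "C \<in> carrier_mat n n" 
  shows "(K + D) * (Q + C) + K * C = K * Q + (D * C + K * C + D * Q) + K * C"
    using c by (simp add: mad mad_add_comm mad_add_lcomm)

lemma test3:
  fixes F M Q :: "tf mat"
  assumes c: "F \<in> carrier_mat na nb" "M \<in> carrier_mat nb na" "Q \<in> carrier_mat na nb" 
  shows "- M * (1\<^sub>m na + Q * M) + (M + M * Q * M) = 0\<^sub>m nb na"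
    "(1\<^sub>m na + Q * M) + Q * (- M) = 1\<^sub>m na"
    "-M * Q + 1\<^sub>m nb + M * Q = 1\<^sub>m nb"
    using c by (simp_all add: madc)


lemma four_block_inj:
  assumes "A \<in> carrier_mat n1 m1" "B \<in> carrier_mat n1 m2" "C \<in> carrier_mat n2 m1" "D \<in> carrier_mat n2 m2"
    "A' \<in> carrier_mat n1 m1" "B' \<in> carrier_mat n1 m2" "C' \<in> carrier_mat n2 m1" "D' \<in> carrier_mat n2 m2"
    and eq: "four_block_mat A B C D = four_block_mat A' B' C' D'"
  shows "A = A' \<and> B = B' \<and> C = C' \<and> D = D'"
proof (intro conjI eq_matI)
  fix i j
  note e = arg_cong[OF eq, of "\<lambda>X. X $$ (i,j)"] arg_cong[OF eq, of "\<lambda>X. X $$ (i,j + m1)"]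
    arg_cong[OF eq, of "\<lambda>X. X $$ (i + n1,j)"] arg_cong[OF eq, of "\<lambda>X. X $$ (i + n1,j + m1)"]
  note a = assms(1-8)[unfolded carrier_mat_def, simplified]
  { assume "i < dim_row A'" "j < dim_col A'" then show "A $$ (i,j) = A' $$ (i,j)" using e(1) a by simp }
  { assume "i < dim_row B'" "j < dim_col B'" then show "B $$ (i,j) = B' $$ (i,j)" using e(2) a by simp }
  { assume "i < dim_row C'" "j < dim_col C'" then show "C $$ (i,j) = C' $$ (i,j)" using e(3) a by simp }
  { assume "i < dim_row D'" "j < dim_col D'" then show "D $$ (i,j) = D' $$ (i,j)" using e(4) a by simp }
qed (use assms in auto)

lemma mat_eq_neg3: assumes "(X::tf mat) + - Y = Z" "dim_row X = dim_row Y" "dim_col X = dim_col Y" shows "X = Z + Y"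
proof -
  from assms have d: "dim_row Z = dim_row Y" "dim_col Z = dim_col Y" "dim_row X = dim_row Y" "dim_col X = dim_col Y"
    by auto
  show ?thesis
  proof (rule eq_matI)
    fix i j assume ij: "i < dim_row (Z + Y)" "j < dim_col (Z + Y)"
    then have "(X + - Y) $$ (i,j) = Z $$ (i,j)" using assms by simp
    then show "X $$ (i,j) = (Z + Y) $$ (i,j)" using ij d by simp
  qed (use d in auto)
qed
lemma mat_eq_neg2: assumes "- Y + (X::tf mat) = Z" "dim_row X = dim_row Y" "dim_col X = dim_col Y" shows "X = Z + Y"
proof -
  from assms have d: "dim_row Z = dim_row Y" "dim_col Z = dim_col Y" "dim_row X = dim_row Y" "dim_col X = dim_col Y"
    by auto
  show ?thesis
  proof (rule eq_matI)
    fix i j assume ij: "i < dim_row (Z + Y)" "j < dim_col (Z + Y)"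
    then have "(- Y + X) $$ (i,j) = Z $$ (i,j)" using assms by simp
    then show "X $$ (i,j) = (Z + Y) $$ (i,j)" using ij d by simp
  qed (use d in auto)
qed

lemma fb_to_Q:
  assumes fb: "fb_stable M F" and cM: "M \<in> carrier_mat nb na" and cF: "F \<in> carrier_mat na nb"
  shows "\<exists>Q \<in> carrier_mat na nb. RH_inf Q \<and> Q = F + F * M * Q \<and> Q = F + Q * M * F"
proof -
  from fb obtain T where cT: "T \<in> carrier_mat (na + nb) (na + nb)"
    and l: "T * four_block_mat (1\<^sub>m na) (- F) (- M) (1\<^sub>m nb) = 1\<^sub>m (na + nb)"
    and r: "four_block_mat (1\<^sub>m na) (- F) (- M) (1\<^sub>m nb) * T = 1\<^sub>m (na + nb)"
    and s: "RH_inf T"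
    unfolding fb_stable_def Let_def using cM cF by auto
  obtain T1 T2 T3 T4 where sp: "split_block T na na = (T1,T2,T3,T4)" by (metis prod_cases4)
  note sb = split_block[OF sp, of nb nb] 
  have c1: "T1 \<in> carrier_mat na na" and c2: "T2 \<in> carrier_mat na nb" and c3: "T3 \<in> carrier_mat nb na"
    and c4: "T4 \<in> carrier_mat nb nb" and Teq: "T = four_block_mat T1 T2 T3 T4" using sb cT by auto
  have "four_block_mat (1\<^sub>m na * T1 + - F * T3) (1\<^sub>m na * T2 + - F * T4) (- M * T1 + 1\<^sub>m nb * T3) (- M * T2 + 1\<^sub>m nb * T4)
     = four_block_mat (1\<^sub>m na) (0\<^sub>m na nb) (0\<^sub>m nb na) (1\<^sub>m nb)"
    using r unfolding Teq
    by (subst (asm) mult_four_block_mat[of _ na na _ nb _ nb _ _ na _ nb]) (use c1 c2 c3 c4 cM cF in auto)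
  from four_block_inj[OF _ _ _ _ _ _ _ _ this, of na na nb nb] c1 c2 c3 c4 cM cF
  have r2: "T2 + - (F * T4) = 0\<^sub>m na nb" and r4: "- (M * T2) + T4 = 1\<^sub>m nb" by auto
  have "four_block_mat (T1 * 1\<^sub>m na + T2 * - M) (T1 * - F + T2 * 1\<^sub>m nb) (T3 * 1\<^sub>m na + T4 * - M) (T3 * - F + T4 * 1\<^sub>m nb)
     = four_block_mat (1\<^sub>m na) (0\<^sub>m na nb) (0\<^sub>m nb na) (1\<^sub>m nb)"
    using l unfolding Teq
    by (subst (asm) mult_four_block_mat[of _ na na _ nb _ nb _ _ na _ nb]) (use c1 c2 c3 c4 cM cF in auto)
  from four_block_inj[OF _ _ _ _ _ _ _ _ this, of na na nb nb] c1 c2 c3 c4 cM cF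
  have l1: "T1 + - (T2 * M) = 1\<^sub>m na" and l2: "- (T1 * F) + T2 = 0\<^sub>m na nb" by auto
  have T2F: "T2 = F * T4" using mat_eq_neg3[OF r2] c2 c4 cF by (simp add: madc)
  have T4M: "T4 = 1\<^sub>m nb + M * T2" using mat_eq_neg2[OF r4] c2 c4 cM by simp
  have T1M: "T1 = 1\<^sub>m na + T2 * M" using mat_eq_neg3[OF l1] c1 c2 cM by simp
  have T2F': "T2 = T1 * F" using mat_eq_neg2[OF l2] c1 c2 cF by (simp add: madc)
  have e1: "T2 = F + F * M * T2" using T2F T4M cF cM c2 by (simp add: madc)
  have e2: "T2 = F + T2 * M * F" using T2F' T1M cF cM c2 by (simp add: madc)
  have "RH_inf T2" using s unfolding Teq using c1 c2 c3 c4 by (simp add: RH_inf_four_block)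
  then show ?thesis using e1 e2 c2 by blast
qed

lemma Q_to_fb:
  assumes cM: "M \<in> carrier_mat nb na" and cF: "F \<in> carrier_mat na nb" and cQ: "Q \<in> carrier_mat na nb"
    and sM: "RH_inf M" and sQ: "RH_inf Q" and e1: "Q = F + F * M * Q" and e2: "Q = F + Q * M * F"
  shows "fb_stable M F"
proof -
  define T where "T = four_block_mat (1\<^sub>m na + Q * M) Q (M + M * Q * M) (1\<^sub>m nb + M * Q)"
  have z1: "Q + - F + - (F * M * Q) = 0\<^sub>m na nb" by (subst e1) (use cF cQ cM in \<open>simp add: madc\<close>)
  have z2: "Q + - F + - (Q * M * F) = 0\<^sub>m na nb" by (subst e2) (use cF cQ cM in \<open>simp add: madc\<close>)
  have cT: "T \<in> carrier_mat (na + nb) (na + nb)" unfolding T_def using cM cQ by auto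
  have "T * four_block_mat (1\<^sub>m na) (- F) (- M) (1\<^sub>m nb) = 
    four_block_mat ((1\<^sub>m na + Q * M) * 1\<^sub>m na + Q * - M) ((1\<^sub>m na + Q * M) * - F + Q * 1\<^sub>m nb)
       ((M + M * Q * M) * 1\<^sub>m na + (1\<^sub>m nb + M * Q) * - M) ((M + M * Q * M) * - F + (1\<^sub>m nb + M * Q) * 1\<^sub>m nb)"
    unfolding T_def by (rule mult_four_block_mat) (use cM cQ cF in auto)
  also have "\<dots> = four_block_mat (1\<^sub>m na) (0\<^sub>m na nb) (0\<^sub>m nb na) (1\<^sub>m nb)"
  proof (rule cong_four_block_mat)
    show "(1\<^sub>m na + Q * M) * 1\<^sub>m na + Q * - M = 1\<^sub>m na" using cM cQ by (simp add: madc)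
    have "(1\<^sub>m na + Q * M) * - F + Q * 1\<^sub>m nb = Q + - F + - (Q * M * F)" using cM cQ cF by (simp add: madc)
    then show "(1\<^sub>m na + Q * M) * - F + Q * 1\<^sub>m nb = 0\<^sub>m na nb" using z2 by simp
    show "(M + M * Q * M) * 1\<^sub>m na + (1\<^sub>m nb + M * Q) * - M = 0\<^sub>m nb na" using cM cQ by (simp add: madc)
    have "(M + M * Q * M) * - F + (1\<^sub>m nb + M * Q) * 1\<^sub>m nb = 1\<^sub>m nb + M * (Q + - F + - (Q * M * F))"
      using cM cQ cF by (simp add: madc)
    then show "(M + M * Q * M) * - F + (1\<^sub>m nb + M * Q) * 1\<^sub>m nb = 1\<^sub>m nb" using z2 cM by simp
  qed
  finally have l: "T * four_block_mat (1\<^sub>m na) (- F) (- M) (1\<^sub>m nb) = 1\<^sub>m (na + nb)" by simp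
  have "four_block_mat (1\<^sub>m na) (- F) (- M) (1\<^sub>m nb) * T = 
    four_block_mat (1\<^sub>m na * (1\<^sub>m na + Q * M) + - F * (M + M * Q * M)) (1\<^sub>m na * Q + - F * (1\<^sub>m nb + M * Q))
       (- M * (1\<^sub>m na + Q * M) + 1\<^sub>m nb * (M + M * Q * M)) (- M * Q + 1\<^sub>m nb * (1\<^sub>m nb + M * Q))"
    unfolding T_def by (rule mult_four_block_mat) (use cM cQ cF in auto)
  also have "\<dots> = four_block_mat (1\<^sub>m na) (0\<^sub>m na nb) (0\<^sub>m nb na) (1\<^sub>m nb)"
  proof (rule cong_four_block_mat)
    have "1\<^sub>m na * (1\<^sub>m na + Q * M) + - F * (M + M * Q * M) = 1\<^sub>m na + (Q + - F + - (F * M * Q)) * M"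
      using cM cQ cF by (simp add: madc)
    then show "1\<^sub>m na * (1\<^sub>m na + Q * M) + - F * (M + M * Q * M) = 1\<^sub>m na" using z1 cM by simp
    have "1\<^sub>m na * Q + - F * (1\<^sub>m nb + M * Q) = Q + - F + - (F * M * Q)" using cM cQ cF by (simp add: madc)
    then show "1\<^sub>m na * Q + - F * (1\<^sub>m nb + M * Q) = 0\<^sub>m na nb" using z1 by simp
    show "- M * (1\<^sub>m na + Q * M) + 1\<^sub>m nb * (M + M * Q * M) = 0\<^sub>m nb na" using cM cQ by (simp add: madc)
    show "- M * Q + 1\<^sub>m nb * (1\<^sub>m nb + M * Q) = 1\<^sub>m nb" using cM cQ by (simp add: madc)
  qed
  finally have r: "four_block_mat (1\<^sub>m na) (- F) (- M) (1\<^sub>m nb) * T = 1\<^sub>m (na + nb)" by simp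
  have sT: "RH_inf T" unfolding T_def using cM cQ sM sQ
    by (subst RH_inf_four_block) (auto intro!: RH_inf_add RH_inf_mult)
  show ?thesis unfolding fb_stable_def Let_def using cM cT l r sT by auto
qed


lemma RH_inf_append_rows: "RH_inf A \<Longrightarrow> RH_inf B \<Longrightarrow> dim_col A = dim_col B \<Longrightarrow> RH_inf (A @\<^sub>r B)"
  unfolding append_rows_def by (rule RH_infI) (auto intro: RH_infD)

lemma RH_inf_append_cols: "RH_inf A \<Longrightarrow> RH_inf B \<Longrightarrow> dim_row A = dim_row B \<Longrightarrow> RH_inf (append_cols_mat A B)"
  unfolding append_cols_mat_def by (rule RH_infI) (auto intro: RH_infD)

lemma append_cols_carrier[simp]: "A \<in> carrier_mat n m1 \<Longrightarrow> B \<in> carrier_mat n m2 \<Longrightarrow> append_cols_mat A B \<in> carrier_mat n (m1 + m2)"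
  unfolding append_cols_mat_def carrier_mat_def by simp

definition Fm :: "tf mat \<Rightarrow> tf mat \<Rightarrow> tf mat" where
  "Fm L K = four_block_mat L (0\<^sub>m (dim_row L) (dim_col K)) (0\<^sub>m (dim_row K) (dim_col L)) K"

lemma pls_iff_fb:
  assumes c: "Pwv \<in> carrier_mat nw nv" "Pwd \<in> carrier_mat nw nd" "Pwu \<in> carrier_mat nw nu"
    "Pzv \<in> carrier_mat nz nv" "Pzd \<in> carrier_mat nz nd" "Pzu \<in> carrier_mat nz nu"
    "Pyv \<in> carrier_mat ny nv" "Pyd \<in> carrier_mat ny nd" "Pyu \<in> carrier_mat ny nu"
    and s: "RH_inf Pwd" "RH_inf Pyd" "RH_inf Pzv" "RH_inf Pzu" "RH_inf Pzd"
  shows "plant_loop_stable Pwv Pwd Pwu Pzv Pzd Pzu Pyv Pyd Pyu Lm Km \<longleftrightarrow>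
     fb_stable (four_block_mat Pwv Pwu Pyv Pyu) (Fm Lm Km)"
proof -
  let ?P = "four_block_mat Pwv Pwu Pyv Pyu"
  let ?E = "0\<^sub>m (nv + nu) nd @\<^sub>r (Pwd @\<^sub>r Pyd)"
  let ?Z = "append_cols_mat (append_cols_mat Pzv Pzu) (0\<^sub>m nz (nw + ny))"
  have dP: "dim_col ?P = nv + nu" "dim_row ?P = nw + ny" using c by auto
  have dE: "dim_col (Pwd @\<^sub>r Pyd) = nd" using c by (auto simp: append_rows_def)
  have dZ: "dim_row (append_cols_mat Pzv Pzu) = nz" using c by (auto simp: append_cols_mat_def)
  have cE: "?E \<in> carrier_mat (nv + nu + (nw + ny)) nd" using c by auto
  have cZ: "?Z \<in> carrier_mat nz (nv + nu + (nw + ny))" using c by auto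
  have sE: "RH_inf ?E" using s c by (intro RH_inf_append_rows) (auto simp: append_rows_def)
  have sZ: "RH_inf ?Z" using s c by (intro RH_inf_append_cols) (auto simp: append_cols_mat_def)
  show ?thesis
    unfolding plant_loop_stable_def int_stable_def fb_stable_def Let_def Fm_def[symmetric] dP dE dZ
  proof (intro iffI; elim exE conjE)
    fix T assume "T \<in> carrier_mat (nv + nu + (nw + ny)) (nv + nu + (nw + ny))"
      "T * four_block_mat (1\<^sub>m (nv + nu)) (- Fm Lm Km) (- ?P) (1\<^sub>m (nw + ny)) = 1\<^sub>m (nv + nu + (nw + ny))"
      "four_block_mat (1\<^sub>m (nv + nu)) (- Fm Lm Km) (- ?P) (1\<^sub>m (nw + ny)) * T = 1\<^sub>m (nv + nu + (nw + ny))"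
      "RH_inf T"
    moreover have dT: "dim_row T = nv + nu + (nw + ny)" "dim_col T = nv + nu + (nw + ny)"
      using calculation(1) by auto
    moreover note dE2 = cE[THEN carrier_matD(1)] cE[THEN carrier_matD(2)]
    moreover note dZ2 = cZ[THEN carrier_matD(1)] cZ[THEN carrier_matD(2)]
    moreover have "RH_inf (T * ?E)" by (rule RH_inf_mult[OF calculation(4) sE]) (simp add: dT dE2)
    moreover have "RH_inf (?Z * T)" by (rule RH_inf_mult[OF sZ calculation(4)]) (simp add: dT dZ2)
    moreover have "RH_inf (?Z * T * ?E + Pzd)"
      by (rule RH_inf_add[OF RH_inf_mult[OF RH_inf_mult[OF sZ calculation(4)] sE] s(5)]) (use c in \<open>simp_all add: dT dZ2 dE2\<close>)
    ultimately show "\<exists>T. T \<in> carrier_mat (nv + nu + (nw + ny)) (nv + nu + (nw + ny)) \<and>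
          T * four_block_mat (1\<^sub>m (nv + nu)) (- Fm Lm Km) (- ?P) (1\<^sub>m (nw + ny)) = 1\<^sub>m (nv + nu + (nw + ny)) \<and>
          four_block_mat (1\<^sub>m (nv + nu)) (- Fm Lm Km) (- ?P) (1\<^sub>m (nw + ny)) * T = 1\<^sub>m (nv + nu + (nw + ny)) \<and>
          RH_inf T \<and> RH_inf (T * ?E) \<and> RH_inf (?Z * T) \<and> RH_inf (?Z * T * ?E + Pzd)" by blast
  qed blast
qed

lemma pls_Q:
  assumes c: "Pwv \<in> carrier_mat nw nv" "Pwd \<in> carrier_mat nw nd" "Pwu \<in> carrier_mat nw nu"
    "Pzv \<in> carrier_mat nz nv" "Pzd \<in> carrier_mat nz nd" "Pzu \<in> carrier_mat nz nu"
    "Pyv \<in> carrier_mat ny nv" "Pyd \<in> carrier_mat ny nd" "Pyu \<in> carrier_mat ny nu"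
    and s: "RH_inf Pwd" "RH_inf Pyd" "RH_inf Pzv" "RH_inf Pzu" "RH_inf Pzd"
      "RH_inf Pwv" "RH_inf Pwu" "RH_inf Pyv" "RH_inf Pyu"
    and cL: "Lm \<in> carrier_mat nv nw" and cK: "Km \<in> carrier_mat nu ny"
  shows "plant_loop_stable Pwv Pwd Pwu Pzv Pzd Pzu Pyv Pyd Pyu Lm Km \<longleftrightarrow>
     (\<exists>Q \<in> carrier_mat (nv + nu) (nw + ny). RH_inf Q \<and>
        Q = Fm Lm Km + Fm Lm Km * four_block_mat Pwv Pwu Pyv Pyu * Q \<and>
        Q = Fm Lm Km + Q * four_block_mat Pwv Pwu Pyv Pyu * Fm Lm Km)"
proof -
  have cP: "four_block_mat Pwv Pwu Pyv Pyu \<in> carrier_mat (nw + ny) (nv + nu)" using c by auto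
  have cF: "Fm Lm Km \<in> carrier_mat (nv + nu) (nw + ny)" unfolding Fm_def using cL cK by auto
  have sP: "RH_inf (four_block_mat Pwv Pwu Pyv Pyu)" using s c by (subst RH_inf_four_block) auto
  show ?thesis unfolding pls_iff_fb[OF c s(1-5)]
    using fb_to_Q[OF _ cP cF] Q_to_fb[OF cP cF _ sP] by blast
qed


lemma Fm_carrier[simp]: "L \<in> carrier_mat nv nw \<Longrightarrow> K \<in> carrier_mat nu ny \<Longrightarrow> Fm L K \<in> carrier_mat (nv + nu) (nw + ny)"
  unfolding Fm_def by auto

lemma FmP:
  assumes c: "A \<in> carrier_mat nw nv" "B \<in> carrier_mat nw nu" "C \<in> carrier_mat ny nv" "D \<in> carrier_mat ny nu"
    "L \<in> carrier_mat nv nw" "K \<in> carrier_mat nu ny"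
  shows "Fm L K * four_block_mat A B C D = four_block_mat (L * A) (L * B) (K * C) (K * D)"
proof -
  have "Fm L K * four_block_mat A B C D = four_block_mat (L * A + 0\<^sub>m nv ny * C) (L * B + 0\<^sub>m nv ny * D)
     (0\<^sub>m nu nw * A + K * C) (0\<^sub>m nu nw * B + K * D)"
    unfolding Fm_def using c by (subst mult_four_block_mat[of _ nv nw _ ny _ nu _ _ nv _ nu]) auto
  also have "\<dots> = four_block_mat (L * A) (L * B) (K * C) (K * D)" using c by (simp add: madc)
  finally show ?thesis .
qed

lemma PFm:
  assumes c: "A \<in> carrier_mat nw nv" "B \<in> carrier_mat nw nu" "C \<in> carrier_mat ny nv" "D \<in> carrier_mat ny nu"
    "L \<in> carrier_mat nv nw" "K \<in> carrier_mat nu ny"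
  shows "four_block_mat A B C D * Fm L K = four_block_mat (A * L) (B * K) (C * L) (D * K)"
proof -
  have "four_block_mat A B C D * Fm L K = four_block_mat (A * L + B * 0\<^sub>m nu nw) (A * 0\<^sub>m nv ny + B * K)
     (C * L + D * 0\<^sub>m nu nw) (C * 0\<^sub>m nv ny + D * K)"
    unfolding Fm_def using c by (subst mult_four_block_mat[of _ nw nv _ nu _ ny _ _ nw _ ny]) auto
  also have "\<dots> = four_block_mat (A * L) (B * K) (C * L) (D * K)" using c by (simp add: madc)
  finally show ?thesis .
qed

lemma construct_Q:
  assumes c: "A \<in> carrier_mat nw nv" "B \<in> carrier_mat nw nu" "C \<in> carrier_mat ny nv" "D \<in> carrier_mat ny nu"
    "L \<in> carrier_mat nv nw" "K \<in> carrier_mat nu ny" and cQL: "QL \<in> carrier_mat nv nw" and cQK: "QK \<in> carrier_mat nu ny"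
    and e1: "QL = L + L * A * QL" and e2: "QL = L + QL * A * L"
    and k1: "QK = K + K * D * QK" and k2: "QK = K + QK * D * K"
    and z: "B * QK * C = 0\<^sub>m nw nv"
  defines "Qf \<equiv> four_block_mat QL (QL * B * QK) (QK * C * QL) (QK + QK * C * QL * B * QK)"
  shows "Qf = Fm L K + Fm L K * four_block_mat A B C D * Qf"
    and "Qf = Fm L K + Qf * four_block_mat A B C D * Fm L K"
proof -
  have Z: "B * (QK * (C * X)) = 0\<^sub>m nw (dim_col X)" if "dim_row X = nv" for X
  proof -
    have "B * (QK * (C * X)) = B * QK * C * X" using c cQK that by (simp add: madc)
    also have "\<dots> = 0\<^sub>m nw (dim_col X)" using z that by simp
    finally show ?thesis .
  qed
  note cc = c cQL cQK
  have "Fm L K * four_block_mat A B C D * Qf = four_block_mat (L * A) (L * B) (K * C) (K * D) * Qf"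
    using FmP[OF c] by simp
  also have "\<dots> = four_block_mat (L * A * QL + L * B * (QK * C * QL)) (L * A * (QL * B * QK) + L * B * (QK + QK * C * QL * B * QK))
     (K * C * QL + K * D * (QK * C * QL)) (K * C * (QL * B * QK) + K * D * (QK + QK * C * QL * B * QK))"
    unfolding Qf_def using cc by (subst mult_four_block_mat[of _ nv nv _ nu _ nu _ _ nw _ ny]) auto
  finally have FPQ: "Fm L K * four_block_mat A B C D * Qf = \<dots>" .
  have "Fm L K + Fm L K * four_block_mat A B C D * Qf = four_block_mat (L + (L * A * QL + L * B * (QK * C * QL)))
     (0\<^sub>m nv ny + (L * A * (QL * B * QK) + L * B * (QK + QK * C * QL * B * QK)))
     (0\<^sub>m nu nw + (K * C * QL + K * D * (QK * C * QL))) (K + (K * C * (QL * B * QK) + K * D * (QK + QK * C * QL * B * QK)))"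
    unfolding FPQ unfolding Fm_def using cc by (subst add_four_block_mat[of _ nv nw _ ny _ nu]) auto
  also have "\<dots> = Qf" unfolding Qf_def
  proof (rule cong_four_block_mat)
    have "L + (L * A * QL + L * B * (QK * C * QL)) = L + L * A * QL" using cc by (simp add: madc Z)
    then show "L + (L * A * QL + L * B * (QK * C * QL)) = QL" using e1 by simp
    have x: "(L + L * A * QL) * B * QK = QL * B * QK" using e1 by simp
    have "0\<^sub>m nv ny + (L * A * (QL * B * QK) + L * B * (QK + QK * C * QL * B * QK)) = (L + L * A * QL) * B * QK"
      using cc by (simp add: madc Z)
    then show "0\<^sub>m nv ny + (L * A * (QL * B * QK) + L * B * (QK + QK * C * QL * B * QK)) = QL * B * QK" using x by simp
    have x: "(K + K * D * QK) * C * QL = QK * C * QL" using k1 by simp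
    have "0\<^sub>m nu nw + (K * C * QL + K * D * (QK * C * QL)) = (K + K * D * QK) * C * QL"
      using cc by (simp add: madc Z)
    then show "0\<^sub>m nu nw + (K * C * QL + K * D * (QK * C * QL)) = QK * C * QL" using x by simp
    have x: "(K + K * D * QK) + (K + K * D * QK) * C * QL * B * QK = QK + QK * C * QL * B * QK"
      using arg_cong[OF k1[symmetric], of "\<lambda>X. X + X * C * QL * B * QK"] by (simp only:)
    have "K + (K * C * (QL * B * QK) + K * D * (QK + QK * C * QL * B * QK)) = (K + K * D * QK) + (K + K * D * QK) * C * QL * B * QK"
      using cc by (simp add: madc Z)
    then show "K + (K * C * (QL * B * QK) + K * D * (QK + QK * C * QL * B * QK)) = QK + QK * C * QL * B * QK" using x by simp
  qed
  finally show "Qf = Fm L K + Fm L K * four_block_mat A B C D * Qf" by simp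
  have "Qf * four_block_mat A B C D * Fm L K = Qf * (four_block_mat A B C D * Fm L K)"
    unfolding Qf_def Fm_def using cc by (subst mad_assoc) auto
  also have "\<dots> = Qf * four_block_mat (A * L) (B * K) (C * L) (D * K)" using PFm[OF c] by simp
  also have "\<dots> = four_block_mat (QL * (A * L) + QL * B * QK * (C * L)) (QL * (B * K) + QL * B * QK * (D * K))
     (QK * C * QL * (A * L) + (QK + QK * C * QL * B * QK) * (C * L)) (QK * C * QL * (B * K) + (QK + QK * C * QL * B * QK) * (D * K))"
    unfolding Qf_def using cc by (subst mult_four_block_mat[of _ nv nw _ ny _ nu _ _ nw _ ny]) auto
  finally have QPF: "Qf * four_block_mat A B C D * Fm L K = \<dots>" .
  have "Fm L K + Qf * four_block_mat A B C D * Fm L K = four_block_mat (L + (QL * (A * L) + QL * B * QK * (C * L)))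
     (0\<^sub>m nv ny + (QL * (B * K) + QL * B * QK * (D * K)))
     (0\<^sub>m nu nw + (QK * C * QL * (A * L) + (QK + QK * C * QL * B * QK) * (C * L)))
     (K + (QK * C * QL * (B * K) + (QK + QK * C * QL * B * QK) * (D * K)))"
    unfolding QPF unfolding Fm_def using cc by (subst add_four_block_mat[of _ nv nw _ ny _ nu]) auto
  also have "\<dots> = Qf" unfolding Qf_def
  proof (rule cong_four_block_mat)
    have "L + (QL * (A * L) + QL * B * QK * (C * L)) = L + QL * A * L" using cc by (simp add: madc Z)
    then show "L + (QL * (A * L) + QL * B * QK * (C * L)) = QL" using e2 by simp
    have x: "QL * B * (K + QK * D * K) = QL * B * QK" using k2 by simp
    have "0\<^sub>m nv ny + (QL * (B * K) + QL * B * QK * (D * K)) = QL * B * (K + QK * D * K)"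
      using cc by (simp add: madc Z)
    then show "0\<^sub>m nv ny + (QL * (B * K) + QL * B * QK * (D * K)) = QL * B * QK" using x by simp
    have x: "QK * C * (L + QL * A * L) = QK * C * QL" using e2 by simp
    have "0\<^sub>m nu nw + (QK * C * QL * (A * L) + (QK + QK * C * QL * B * QK) * (C * L)) = QK * C * (L + QL * A * L)"
      using cc by (simp add: madc Z)
    then show "0\<^sub>m nu nw + (QK * C * QL * (A * L) + (QK + QK * C * QL * B * QK) * (C * L)) = QK * C * QL" using x by simp
    have x: "(K + QK * D * K) + QK * C * QL * B * (K + QK * D * K) = QK + QK * C * QL * B * QK"
      using arg_cong[OF k2[symmetric], of "\<lambda>X. X + QK * C * QL * B * X"] by (simp only:)
    have "K + (QK * C * QL * (B * K) + (QK + QK * C * QL * B * QK) * (D * K)) = (K + QK * D * K) + QK * C * QL * B * (K + QK * D * K)"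
      using cc by (simp add: madc Z)
    then show "K + (QK * C * QL * (B * K) + (QK + QK * C * QL * B * QK) * (D * K)) = QK + QK * C * QL * B * QK" using x by simp
  qed
  finally show "Qf = Fm L K + Qf * four_block_mat A B C D * Fm L K" by simp
qed


lemma lemmaC:
  assumes c: "Pwv \<in> carrier_mat nw nv" "Pwd \<in> carrier_mat nw nd" "Pwu \<in> carrier_mat nw nu"
    "Pzv \<in> carrier_mat nz nv" "Pzd \<in> carrier_mat nz nd" "Pzu \<in> carrier_mat nz nu"
    "Pyv \<in> carrier_mat ny nv" "Pyd \<in> carrier_mat ny nd" "Pyu \<in> carrier_mat ny nu"
    and s: "RH_inf Pwd" "RH_inf Pyd" "RH_inf Pzv" "RH_inf Pzu" "RH_inf Pzd"
      "RH_inf Pwv" "RH_inf Pwu" "RH_inf Pyv" "RH_inf Pyu"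
    and cL: "L \<in> carrier_mat nv nw" and cK: "K \<in> carrier_mat nu ny"
    and fb: "fb_stable Pwv L"
    and cQK: "QK \<in> carrier_mat nu ny" and sQK: "RH_inf QK"
    and k1: "QK = K + K * Pyu * QK" and k2: "QK = K + QK * Pyu * K"
    and z: "Pwu * QK * Pyv = 0\<^sub>m nw nv"
  shows "plant_loop_stable Pwv Pwd Pwu Pzv Pzd Pzu Pyv Pyd Pyu L K"
proof -
  obtain QL where cQL: "QL \<in> carrier_mat nv nw" and sQL: "RH_inf QL"
    and e1: "QL = L + L * Pwv * QL" and e2: "QL = L + QL * Pwv * L"
    using fb_to_Q[OF fb c(1) cL] by blast
  define Qf where "Qf \<equiv> four_block_mat QL (QL * Pwu * QK) (QK * Pyv * QL) (QK + QK * Pyv * QL * Pwu * QK)"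
  note cq = construct_Q[OF c(1) c(3) c(7) c(9) cL cK cQL cQK e1 e2 k1 k2 z, folded Qf_def]
  have cQf: "Qf \<in> carrier_mat (nv + nu) (nw + ny)" unfolding Qf_def using c cQL cQK by auto
  have sQf: "RH_inf Qf" unfolding Qf_def using c cQL cQK sQL sQK s
    by (subst RH_inf_four_block) (auto intro!: RH_inf_add RH_inf_mult)
  show ?thesis unfolding pls_Q[OF c s cL cK] using cQf sQf cq by blast
qed

lemma extract_K:
  assumes c: "A \<in> carrier_mat nw nv" "B \<in> carrier_mat nw nu" "C \<in> carrier_mat ny nv" "D \<in> carrier_mat ny nu"
    "K \<in> carrier_mat nu ny" and cQ: "Q \<in> carrier_mat (nv + nu) (nw + ny)" and sQ: "RH_inf Q"
    and e1: "Q = Fm (0\<^sub>m nv nw) K + Fm (0\<^sub>m nv nw) K * four_block_mat A B C D * Q"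
    and e2: "Q = Fm (0\<^sub>m nv nw) K + Q * four_block_mat A B C D * Fm (0\<^sub>m nv nw) K"
  shows "\<exists>QK \<in> carrier_mat nu ny. RH_inf QK \<and> QK = K + K * D * QK \<and> QK = K + QK * D * K"
proof -
  obtain Q1 Q2 Q3 Q4 where sp: "split_block Q nv nw = (Q1,Q2,Q3,Q4)" by (metis prod_cases4)
  note sb = split_block[OF sp, of nu ny]
  have c1: "Q1 \<in> carrier_mat nv nw" and c2: "Q2 \<in> carrier_mat nv ny" and c3: "Q3 \<in> carrier_mat nu nw"
    and c4: "Q4 \<in> carrier_mat nu ny" and Qeq: "Q = four_block_mat Q1 Q2 Q3 Q4" using sb cQ by auto
  have cz: "0\<^sub>m nv nw \<in> carrier_mat nv nw" by simp
  note cc = c c1 c2 c3 c4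
  have "Fm (0\<^sub>m nv nw) K + Fm (0\<^sub>m nv nw) K * four_block_mat A B C D * Q
     = Fm (0\<^sub>m nv nw) K + four_block_mat (0\<^sub>m nv nw * A) (0\<^sub>m nv nw * B) (K * C) (K * D) * Q"
    using FmP[OF c(1-4) cz c(5)] by simp
  also have "\<dots> = four_block_mat (0\<^sub>m nv nw + (0\<^sub>m nv nw * A * Q1 + 0\<^sub>m nv nw * B * Q3))
      (0\<^sub>m nv ny + (0\<^sub>m nv nw * A * Q2 + 0\<^sub>m nv nw * B * Q4))
      (0\<^sub>m nu nw + (K * C * Q1 + K * D * Q3)) (K + (K * C * Q2 + K * D * Q4))"
    unfolding Qeq using cc
    apply (subst mult_four_block_mat[of _ nv nv _ nu _ nu _ _ nw _ ny])
    apply (auto)[8]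
    unfolding Fm_def
    by (subst add_four_block_mat[of _ nv nw _ ny _ nu]) auto
  finally have "four_block_mat Q1 Q2 Q3 Q4 = \<dots>" using e1 Qeq by simp
  from four_block_inj[OF _ _ _ _ _ _ _ _ this, of nv nw ny nu] cc
  have q2: "Q2 = 0\<^sub>m nv ny" and q4: "Q4 = K + (K * C * Q2 + K * D * Q4)" by (auto simp: madc)
  have "Fm (0\<^sub>m nv nw) K + Q * four_block_mat A B C D * Fm (0\<^sub>m nv nw) K
     = Fm (0\<^sub>m nv nw) K + Q * (four_block_mat A B C D * Fm (0\<^sub>m nv nw) K)"
    unfolding Qeq Fm_def using cc by (subst mad_assoc) auto
  also have "\<dots> = Fm (0\<^sub>m nv nw) K + Q * four_block_mat (A * 0\<^sub>m nv nw) (B * K) (C * 0\<^sub>m nv nw) (D * K)"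
    using PFm[OF c(1-4) cz c(5)] by simp
  also have "\<dots> = four_block_mat (0\<^sub>m nv nw + (Q1 * (A * 0\<^sub>m nv nw) + Q2 * (C * 0\<^sub>m nv nw)))
      (0\<^sub>m nv ny + (Q1 * (B * K) + Q2 * (D * K)))
      (0\<^sub>m nu nw + (Q3 * (A * 0\<^sub>m nv nw) + Q4 * (C * 0\<^sub>m nv nw))) (K + (Q3 * (B * K) + Q4 * (D * K)))"
    unfolding Qeq using cc
    apply (subst mult_four_block_mat[of _ nv nw _ ny _ nu _ _ nw _ ny])
    apply (auto)[8]
    unfolding Fm_def
    by (subst add_four_block_mat[of _ nv nw _ ny _ nu]) auto
  finally have "four_block_mat Q1 Q2 Q3 Q4 = \<dots>" using e2 Qeq by simp
  from four_block_inj[OF _ _ _ _ _ _ _ _ this, of nv nw ny nu] cc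
  have q3: "Q3 = 0\<^sub>m nu nw" and q4': "Q4 = K + (Q3 * (B * K) + Q4 * (D * K))" by (auto simp: madc)
  have k1: "Q4 = K + K * D * Q4" using q4 q2 cc by (simp add: madc)
  have k2: "Q4 = K + Q4 * D * K" using q4' q3 cc by (simp add: madc)
  have "RH_inf Q4" using sQ unfolding Qeq using cc by (simp add: RH_inf_four_block)
  then show ?thesis using k1 k2 c4 by blast
qed


lemma extract_V:
  assumes c: "A \<in> carrier_mat nw nv" "B \<in> carrier_mat nw nu" "C \<in> carrier_mat ny nv" "D \<in> carrier_mat ny nu"
    "L \<in> carrier_mat nv nw" "K \<in> carrier_mat nu ny" and cQ: "Q \<in> carrier_mat (nv + nu) (nw + ny)" and sQ: "RH_inf Q"
    and e1: "Q = Fm L K + Fm L K * four_block_mat A B C D * Q"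
    and cQK: "QK \<in> carrier_mat nu ny" and k2: "QK = K + QK * D * K"
  shows "\<exists>V \<in> carrier_mat nv nw. RH_inf V \<and> V = L + L * (A + B * QK * C) * V"
proof -
  obtain Q1 Q2 Q3 Q4 where sp: "split_block Q nv nw = (Q1,Q2,Q3,Q4)" by (metis prod_cases4)
  note sb = split_block[OF sp, of nu ny]
  have c1: "Q1 \<in> carrier_mat nv nw" and c2: "Q2 \<in> carrier_mat nv ny" and c3: "Q3 \<in> carrier_mat nu nw"
    and c4: "Q4 \<in> carrier_mat nu ny" and Qeq: "Q = four_block_mat Q1 Q2 Q3 Q4" using sb cQ by auto
  note cc = c c1 c2 c3 c4 cQK
  have "Fm L K + Fm L K * four_block_mat A B C D * Q
     = Fm L K + four_block_mat (L * A) (L * B) (K * C) (K * D) * Q"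
    using FmP[OF c] by simp
  also have "\<dots> = four_block_mat (L + (L * A * Q1 + L * B * Q3))
      (0\<^sub>m nv ny + (L * A * Q2 + L * B * Q4))
      (0\<^sub>m nu nw + (K * C * Q1 + K * D * Q3)) (K + (K * C * Q2 + K * D * Q4))"
    unfolding Qeq using cc
    apply (subst mult_four_block_mat[of _ nv nv _ nu _ nu _ _ nw _ ny])
    apply (auto)[8]
    unfolding Fm_def
    by (subst add_four_block_mat[of _ nv nw _ ny _ nu]) auto
  finally have "four_block_mat Q1 Q2 Q3 Q4 = \<dots>" using e1 Qeq by simp
  from four_block_inj[OF _ _ _ _ _ _ _ _ this, of nv nw ny nu] cc
  have q1: "Q1 = L + (L * A * Q1 + L * B * Q3)" and q3: "Q3 = 0\<^sub>m nu nw + (K * C * Q1 + K * D * Q3)" by auto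
  have q3': "Q3 = K * C * Q1 + K * D * Q3" using q3 cc by (simp add: madc)
  have h1: "Q3 + - (K * D * Q3) = K * C * Q1" by (subst (1) q3') (use cc in \<open>simp add: madc\<close>)
  have z: "QK + - K + - (QK * D * K) = 0\<^sub>m nu ny" by (subst (1) k2) (use cc in \<open>simp add: madc\<close>)
  have "(1\<^sub>m nu + QK * D) * (Q3 + - (K * D * Q3)) = Q3 + (QK + - K + - (QK * D * K)) * D * Q3"
    using cc by (simp add: madc)
  also have "\<dots> = Q3" using z cc by simp
  finally have "Q3 = (1\<^sub>m nu + QK * D) * (K * C * Q1)" using h1 by simp
  also have "\<dots> = (K + QK * D * K) * C * Q1" using cc by (simp add: madc)
  also have "\<dots> = QK * C * Q1" using k2 by simp
  finally have u: "Q3 = QK * C * Q1" .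
  have "Q1 = L + L * (A + B * QK * C) * Q1"
    by (subst (1) q1) (use cc u in \<open>simp add: madc\<close>)
  moreover have "RH_inf Q1" using sQ unfolding Qeq using cc by (simp add: RH_inf_four_block)
  ultimately show ?thesis using c1 by blast
qed


definition Emat :: "nat \<Rightarrow> nat \<Rightarrow> nat \<Rightarrow> nat \<Rightarrow> tf \<Rightarrow> tf mat" where
  "Emat n m j i x = mat n m (\<lambda>(a,b). if a = j \<and> b = i then x else 0)"

lemma Emat_carrier[simp]: "Emat n m j i x \<in> carrier_mat n m" unfolding Emat_def by auto

lemma Emat_dim[simp]: "dim_row (Emat n m j i x) = n" "dim_col (Emat n m j i x) = m" unfolding Emat_def by auto

lemma Emat_index[simp]: "a < n \<Longrightarrow> b < m \<Longrightarrow> Emat n m j i x $$ (a,b) = (if a = j \<and> b = i then x else 0)"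
  unfolding Emat_def by auto

lemma Emat_mult_left:
  assumes "i < m" "X \<in> carrier_mat m k" "r < n" "c < k"
  shows "(Emat n m j i x * X) $$ (r,c) = (if r = j then x * X $$ (i,c) else 0)"
proof -
  have d: "dim_row X = m" "dim_col X = k" using assms(2) by auto
  have "(Emat n m j i x * X) $$ (r,c) = (\<Sum>k \<in> {0..<m}. (if r = j \<and> k = i then x else 0) * X $$ (k,c))"
    using assms(1,3,4) d by (simp add: scalar_prod_def)
  also have "\<dots> = (\<Sum>k \<in> {0..<m}. if k = i then (if r = j then x * X $$ (i,c) else 0) else 0)"
    by (rule sum.cong) auto
  also have "\<dots> = (if r = j then x * X $$ (i,c) else 0)" using assms by simp
  finally show ?thesis .
qed

lemma Emat_mult_right:
  assumes "j < n" "X \<in> carrier_mat k n" "r < k" "c < m"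
  shows "(X * Emat n m j i x) $$ (r,c) = (if c = i then X $$ (r,j) * x else 0)"
proof -
  have d: "dim_row X = k" "dim_col X = n" using assms(2) by auto
  have "(X * Emat n m j i x) $$ (r,c) = (\<Sum>k \<in> {0..<n}. X $$ (r,k) * (if k = j \<and> c = i then x else 0))"
    using assms(1,3,4) d by (simp add: scalar_prod_def)
  also have "\<dots> = (\<Sum>k \<in> {0..<n}. if k = j then (if c = i then X $$ (r,j) * x else 0) else 0)"
    by (rule sum.cong) auto
  also have "\<dots> = (if c = i then X $$ (r,j) * x else 0)" using assms by simp
  finally show ?thesis .
qed

lemma proper_tf_0[simp]: "proper_tf 0"
  unfolding proper_tf_def by (rule exI[of _ 0], rule exI[of _ 1]) (auto simp: Zero_fract_def)

lemma exists_pos_nonroot: assumes "(a :: real poly) \<noteq> 0" shows "\<exists>x>0. poly a x \<noteq> 0"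
proof (rule ccontr)
  assume "\<not> ?thesis"
  then have "{0<..} \<subseteq> {x. poly a x = 0}" by auto
  then have "finite {0::real<..}" using poly_roots_finite[OF assms] finite_subset by blast
  then show False using infinite_Ioi by blast
qed

lemma stable_nonzero_pos:
  assumes "\<forall>z::complex. poly (map_poly complex_of_real q) z = 0 \<longrightarrow> Re z < 0" "(s0::real) \<ge> 0"
  shows "poly q s0 \<noteq> 0"
proof
  assume "poly q s0 = 0"
  then have "poly (map_poly complex_of_real q) (of_real s0) = 0" by (simp add: poly_of_real_map)
  then show False using assms by fastforce
qed

lemma scalar_destab:
  assumes sv: "stable_tf v" and sd: "stable_tf \<delta>" and eq: "v * (1 - Fract [:c:] [:1,1:] * \<delta>) = Fract [:c:] [:1,1:]"
    and d: "\<delta> = Fract a b" "b \<noteq> 0" and s0: "s0 > 0" "poly b s0 \<noteq> 0" "poly a s0 \<noteq> 0"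
    and cdef: "c = (s0 + 1) * poly b s0 / poly a s0"
  shows False
proof -
  from sv obtain p q where v: "q \<noteq> 0" "v = Fract p q"
    "\<forall>z::complex. poly (map_poly complex_of_real q) z = 0 \<longrightarrow> Re z < 0"
    unfolding stable_tf_def by metis
  have q0: "poly q s0 \<noteq> 0" using stable_nonzero_pos[OF v(3)] s0 by simp
  have c0: "c \<noteq> 0" using cdef s0 by simp
  have nz: "[:1,1:] * b \<noteq> (0::real poly)" by (rule no_zero_divisors) (simp_all add: d)
  have "1 - Fract [:c:] [:1,1:] * \<delta> = Fract 1 1 - Fract ([:c:] * a) ([:1,1:] * b)"
    by (simp only: d(1) mult_fract One_fract_def)
  also have "\<dots> = Fract (1 * ([:1,1:] * b) - ([:c:] * a) * 1) (1 * ([:1,1:] * b))"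
    by (rule diff_fract[OF one_neq_zero nz])
  also have "\<dots> = Fract ([:1,1:] * b - [:c:] * a) ([:1,1:] * b)" by simp
  finally have "1 - Fract [:c:] [:1,1:] * \<delta> = Fract ([:1,1:] * b - [:c:] * a) ([:1,1:] * b)" .
  then have "Fract (p * ([:1,1:] * b - [:c:] * a)) (q * ([:1,1:] * b)) = Fract [:c:] [:1,1:]"
    using eq v by simp
  then have "p * ([:1,1:] * b - [:c:] * a) * [:1,1:] = [:c:] * (q * ([:1,1:] * b))"
    using v nz by (simp add: eq_fract)
  moreover obtain N where Nd: "N = [:1,1:] * b - [:c:] * a" by blast
  moreover have N0: "poly N s0 = 0"
  proof -
    have "poly N s0 = (1 + s0) * poly b s0 - c * poly a s0" unfolding Nd by (simp add: algebra_simps)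
    also have "c * poly a s0 = (s0 + 1) * poly b s0" using cdef s0 by simp
    finally show ?thesis by simp
  qed
  ultimately have "p * N * [:1,1:] = [:c:] * (q * ([:1,1:] * b))" by simp
  then have "poly (p * N * [:1,1:]) s0 = poly ([:c:] * (q * ([:1,1:] * b))) s0" by simp
  then have "c = 0 \<or> poly q s0 = 0 \<or> poly b s0 + s0 * poly b s0 = 0" using N0 by simp
  moreover have "poly b s0 + s0 * poly b s0 = (1 + s0) * poly b s0" by (simp add: algebra_simps)
  moreover have "(1 + s0) * poly b s0 \<noteq> 0" using s0 by simp
  ultimately show False using c0 q0 by simp
qed


lemma stable_r: "stable_tf (Fract [:c:] [:1,1:])"
proof -
  have "\<forall>z::complex. poly (map_poly complex_of_real [:1,1:]) z = 0 \<longrightarrow> Re z < 0"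
  proof (intro allI impI)
    fix z :: complex assume "poly (map_poly complex_of_real [:1,1:]) z = 0"
    then have "1 + z = 0" by (simp add: map_poly_pCons)
    then have "z = -1" by (simp add: add_eq_0_iff)
    then show "Re z < 0" by simp
  qed
  then show ?thesis unfolding stable_tf_def by (intro exI[of _ "[:c:]"] exI[of _ "[:1,1:]"]) auto
qed

lemma destab:
  assumes cA: "A \<in> carrier_mat nw nv" and sA: "RH_inf A" and cD: "\<Delta> \<in> carrier_mat nw nv" and sD: "RH_inf \<Delta>"
    and nz: "\<Delta> \<noteq> 0\<^sub>m nw nv"
    and H: "\<And>L. L \<in> carrier_mat nv nw \<Longrightarrow> proper_mat L \<Longrightarrow> fb_stable A L \<Longrightarrow>
      \<exists>V \<in> carrier_mat nv nw. RH_inf V \<and> V = L + L * (A + \<Delta>) * V"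
  shows False
proof -
  obtain i j where ij: "i < nw" "j < nv" "\<Delta> $$ (i,j) \<noteq> 0"
    using nz cD by (auto simp: mat_eq_iff)
  define \<delta> where "\<delta> = \<Delta> $$ (i,j)"
  have sd: "stable_tf \<delta>" unfolding \<delta>_def using RH_infD[OF sD] ij cD by auto
  then obtain a b where d: "b \<noteq> 0" "\<delta> = Fract a b" 
    "\<forall>z::complex. poly (map_poly complex_of_real b) z = 0 \<longrightarrow> Re z < 0"
    unfolding stable_tf_def by metis
  have a0: "a \<noteq> 0" using d ij \<delta>_def by (auto simp: eq_fract Zero_fract_def)
  obtain s0 where s0: "s0 > 0" "poly a s0 \<noteq> 0" using exists_pos_nonroot[OF a0] by blast
  have pb: "poly b s0 \<noteq> 0" using stable_nonzero_pos[OF d(3)] s0 by simp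
  define c where "c = (s0 + 1) * poly b s0 / poly a s0"
  have c0: "c \<noteq> 0" using pb s0 unfolding c_def by simp
  define a0 where "a0 = A $$ (i,j)"
  have "stable_tf a0" unfolding a0_def using RH_infD[OF sA] ij cA by auto
  then obtain p' q' where pq: "q' \<noteq> 0" "a0 = Fract p' q'" "degree p' \<le> degree q'"
    unfolding stable_tf_def by metis
  define r where "r = Fract [:c:] [:1,1:]"
  define den where "den = [:1,1:] * q' + [:c:] * p'"
  define l where "l = Fract ([:c:] * q') den"
  have nz11: "[:1,1:] * q' \<noteq> (0::real poly)" by (rule no_zero_divisors) (simp_all add: pq)
  have dq: "degree ([:1,1:] * q') = Suc (degree q')" using pq by (subst degree_mult_eq) auto
  have dp: "degree ([:c:] * p') \<le> degree q'" using degree_mult_le[of "[:c:]" p'] pq by simp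
  have dden: "degree den = Suc (degree q')" unfolding den_def using dq dp
    by (subst degree_add_eq_left) auto
  have den0: "den \<noteq> 0" using dden by auto
  have pl: "proper_tf l" unfolding l_def proper_tf_def
    using den0 dden degree_mult_le[of "[:c:]" q'] by (intro exI[of _ "[:c:] * q'"] exI[of _ den]) auto
  have key: "l * (1 + r * a0) = r"
  proof -
    have "1 + r * a0 = Fract 1 1 + Fract ([:c:] * p') ([:1,1:] * q')"
      by (simp only: r_def pq(2) mult_fract One_fract_def)
    also have "\<dots> = Fract (1 * ([:1,1:] * q') + ([:c:] * p') * 1) (1 * ([:1,1:] * q'))"
      by (rule add_fract[OF one_neq_zero nz11])
    also have "\<dots> = Fract den ([:1,1:] * q')" unfolding den_def by simp
    finally have "l * (1 + r * a0) = Fract ([:c:] * q' * den) (den * ([:1,1:] * q'))"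
      unfolding l_def by simp
    also have "\<dots> = r"
    proof -
      have dn: "den * ([:1,1:] * q') \<noteq> 0" by (rule no_zero_divisors[OF den0 nz11])
      have "[:c:] * q' * den * [:1,1:] = [:c:] * (den * ([:1,1:] * q'))" by (simp only: ac_simps)
      moreover have iff: "(Fract ([:c:] * q' * den) (den * ([:1,1:] * q')) = Fract [:c:] [:1,1:]) =
          ([:c:] * q' * den * [:1,1:] = [:c:] * (den * ([:1,1:] * q')))"
        by (rule eq_fract(1)[OF dn]) simp
      ultimately show ?thesis unfolding r_def by (simp only:)
    qed
    finally show ?thesis .
  qed
  define L where "L = Emat nv nw j i l"
  define Qr where "Qr = Emat nv nw j i r"
  have cL: "L \<in> carrier_mat nv nw" and cQ: "Qr \<in> carrier_mat nv nw" unfolding L_def Qr_def by auto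
  have pL: "proper_mat L" unfolding proper_mat_def L_def using pl by auto
  have sQ: "RH_inf Qr" unfolding Qr_def using stable_r[of c] r_def by (intro RH_infI) auto
  have AQ: "(A * Qr) $$ (i,y) = (if y = i then a0 * r else 0)" if "y < nw" for y
    unfolding Qr_def a0_def using Emat_mult_right[OF ij(2) cA ij(1) that] .
  have AL: "(A * L) $$ (i,y) = (if y = i then a0 * l else 0)" if "y < nw" for y
    unfolding L_def a0_def using Emat_mult_right[OF ij(2) cA ij(1) that] .
  have dims: "dim_row L = nv" "dim_col L = nw" "dim_row Qr = nv" "dim_col Qr = nw" "dim_row A = nw" "dim_col A = nv"
    using cL cQ cA by auto
  have Lx: "L $$ (x,y) = (if x = j \<and> y = i then l else 0)" if "x < nv" "y < nw" for x y
    unfolding L_def using that by simp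
  have Qx: "Qr $$ (x,y) = (if x = j \<and> y = i then r else 0)" if "x < nv" "y < nw" for x y
    unfolding Qr_def using that by simp
  have key': "l + l * (a0 * r) = r" using key by (simp add: algebra_simps)
  have key'': "l + r * (a0 * l) = r" using key by (simp add: algebra_simps)
  have e1: "Qr = L + L * A * Qr"
  proof (rule eq_matI)
    fix x y assume xy: "x < dim_row (L + L * A * Qr)" "y < dim_col (L + L * A * Qr)"
    then have xy': "x < nv" "y < nw" using dims by auto
    have "L * A * Qr = L * (A * Qr)" using cL cA cQ by (simp add: mad_assoc)
    then have "(L * A * Qr) $$ (x,y) = (if x = j then l * (A * Qr) $$ (i,y) else 0)"
      unfolding L_def using Emat_mult_left[of i nw "A * Qr" nw x nv y j l] ij cA cQ xy' by auto
    moreover have "(L + L * A * Qr) $$ (x,y) = L $$ (x,y) + (L * A * Qr) $$ (x,y)" using xy' dims by simp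
    ultimately show "Qr $$ (x,y) = (L + L * A * Qr) $$ (x,y)"
      using Lx[OF xy'] Qx[OF xy'] AQ[OF xy'(2)] key' by auto
  qed (use dims in auto)
  have e2: "Qr = L + Qr * A * L"
  proof (rule eq_matI)
    fix x y assume xy: "x < dim_row (L + Qr * A * L)" "y < dim_col (L + Qr * A * L)"
    then have xy': "x < nv" "y < nw" using dims by auto
    have "Qr * A * L = Qr * (A * L)" using cL cA cQ by (simp add: mad_assoc)
    then have "(Qr * A * L) $$ (x,y) = (if x = j then r * (A * L) $$ (i,y) else 0)"
      unfolding Qr_def using Emat_mult_left[of i nw "A * L" nw x nv y j r] ij cA cL xy' by auto
    moreover have "(L + Qr * A * L) $$ (x,y) = L $$ (x,y) + (Qr * A * L) $$ (x,y)" using xy' dims by simp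
    ultimately show "Qr $$ (x,y) = (L + Qr * A * L) $$ (x,y)"
      using Lx[OF xy'] Qx[OF xy'] AL[OF xy'(2)] key'' by auto
  qed (use dims in auto)
  have fb: "fb_stable A L" by (rule Q_to_fb[OF cA cL cQ sA sQ e1 e2])
  obtain V where cV: "V \<in> carrier_mat nv nw" and sV: "RH_inf V" and veq: "V = L + L * (A + \<Delta>) * V"
    using H[OF cL pL fb] by blast
  define G' where "G' = A + \<Delta>"
  have cG: "G' \<in> carrier_mat nw nv" unfolding G'_def using cA cD by auto
  have Ventry: "V $$ (x,y) = (if x = j \<and> y = i then l else 0) + (if x = j then l * (G' * V) $$ (i,y) else 0)"
    if "x < nv" "y < nw" for x y
  proof -
    have "L * G' * V = L * (G' * V)" using cL cG cV by (simp add: mad_assoc)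
    then have "(L * G' * V) $$ (x,y) = (if x = j then l * (G' * V) $$ (i,y) else 0)"
      unfolding L_def using Emat_mult_left[of i nw "G' * V" nw x nv y j l] ij cG cV that by auto
    moreover have "V $$ (x,y) = (L + L * G' * V) $$ (x,y)" using veq G'_def by simp
    ultimately show ?thesis using that cL cG cV unfolding L_def by simp
  qed
  have V0: "V $$ (x,i) = 0" if "x < nv" "x \<noteq> j" for x using Ventry[OF that(1) ij(1)] that by simp
  have "(G' * V) $$ (i,i) = (\<Sum>k \<in> {0..<nv}. G' $$ (i,k) * V $$ (k,i))"
    using cG cV ij by (simp add: scalar_prod_def)
  also have "\<dots> = (\<Sum>k \<in> {0..<nv}. if k = j then G' $$ (i,j) * V $$ (j,i) else 0)"
    by (rule sum.cong) (auto simp: V0)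
  also have "\<dots> = G' $$ (i,j) * V $$ (j,i)" using ij by simp
  finally have GV: "(G' * V) $$ (i,i) = (a0 + \<delta>) * V $$ (j,i)"
    unfolding G'_def a0_def \<delta>_def using ij cA cD by simp
  define v where "v = V $$ (j,i)"
  have vl: "v = l + l * ((a0 + \<delta>) * v)" using Ventry[OF ij(2) ij(1)] GV unfolding v_def by simp
  have sv: "stable_tf v" unfolding v_def using RH_infD[OF sV] ij cV by auto
  have "v * (1 + r * a0) = l * (1 + r * a0) + l * (1 + r * a0) * ((a0 + \<delta>) * v)"
    by (subst vl) (simp add: algebra_simps)
  then have "v * (1 + r * a0) = r + r * ((a0 + \<delta>) * v)" using key by simp
  then have veq2: "v * (1 - r * \<delta>) = r" by (simp add: algebra_simps)
  show False
    by (rule scalar_destab[OF sv sd veq2[unfolded r_def] d(2) d(1) s0(1) pb s0(2) c_def])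
qed


lemma lemmaD:
  assumes c: "Pwv \<in> carrier_mat nw nv" "Pwd \<in> carrier_mat nw nd" "Pwu \<in> carrier_mat nw nu"
    "Pzv \<in> carrier_mat nz nv" "Pzd \<in> carrier_mat nz nd" "Pzu \<in> carrier_mat nz nu"
    "Pyv \<in> carrier_mat ny nv" "Pyd \<in> carrier_mat ny nd" "Pyu \<in> carrier_mat ny nu"
    and s: "RH_inf Pwd" "RH_inf Pyd" "RH_inf Pzv" "RH_inf Pzu" "RH_inf Pzd"
      "RH_inf Pwv" "RH_inf Pwu" "RH_inf Pyv" "RH_inf Pyu"
    and cK: "K \<in> carrier_mat nu ny"
    and H: "\<And>L. L \<in> carrier_mat nv nw \<Longrightarrow> proper_mat L \<Longrightarrow> fb_stable Pwv L \<Longrightarrow>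
      plant_loop_stable Pwv Pwd Pwu Pzv Pzd Pzu Pyv Pyd Pyu L K"
  shows "\<exists>QK \<in> carrier_mat nu ny. RH_inf QK \<and> QK = K + K * Pyu * QK \<and> QK = K + QK * Pyu * K
     \<and> Pwu * QK * Pyv = 0\<^sub>m nw nv"
proof -
  have cz: "0\<^sub>m nv nw \<in> carrier_mat nv nw" by simp
  have pz: "proper_mat (0\<^sub>m nv nw)" unfolding proper_mat_def by simp
  have fz: "fb_stable Pwv (0\<^sub>m nv nw)"
  proof (rule Q_to_fb[OF c(1) cz cz s(6)])
    show "RH_inf (0\<^sub>m nv nw)" by simp
    have "0\<^sub>m nv nw * Pwv * 0\<^sub>m nv nw = 0\<^sub>m nv nw" using c(1) by simp
    then show "0\<^sub>m nv nw = 0\<^sub>m nv nw + 0\<^sub>m nv nw * Pwv * 0\<^sub>m nv nw"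
      "0\<^sub>m nv nw = 0\<^sub>m nv nw + 0\<^sub>m nv nw * Pwv * 0\<^sub>m nv nw" by simp_all
  qed
  obtain Q where "Q \<in> carrier_mat (nv + nu) (nw + ny)" "RH_inf Q"
    "Q = Fm (0\<^sub>m nv nw) K + Fm (0\<^sub>m nv nw) K * four_block_mat Pwv Pwu Pyv Pyu * Q"
    "Q = Fm (0\<^sub>m nv nw) K + Q * four_block_mat Pwv Pwu Pyv Pyu * Fm (0\<^sub>m nv nw) K"
    using H[OF cz pz fz] unfolding pls_Q[OF c s cz cK] by blast
  from extract_K[OF c(1) c(3) c(7) c(9) cK this]
  obtain QK where cQK: "QK \<in> carrier_mat nu ny" and sQK: "RH_inf QK" and k1: "QK = K + K * Pyu * QK"
    and k2: "QK = K + QK * Pyu * K" by blast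
  have "Pwu * QK * Pyv = 0\<^sub>m nw nv"
  proof (rule ccontr)
    assume nz: "Pwu * QK * Pyv \<noteq> 0\<^sub>m nw nv"
    show False
    proof (rule destab[OF c(1) s(6) _ _ nz])
      show "Pwu * QK * Pyv \<in> carrier_mat nw nv" using c cQK by auto
      show "RH_inf (Pwu * QK * Pyv)" using c cQK by (intro RH_inf_mult[OF RH_inf_mult[OF s(7) sQK] s(8)]) auto
      fix L assume cL: "L \<in> carrier_mat nv nw" and pL: "proper_mat L" and fL: "fb_stable Pwv L"
      obtain Q where "Q \<in> carrier_mat (nv + nu) (nw + ny)" "RH_inf Q"
        "Q = Fm L K + Fm L K * four_block_mat Pwv Pwu Pyv Pyu * Q"
        using H[OF cL pL fL] unfolding pls_Q[OF c s cL cK] by blast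
      from extract_V[OF c(1) c(3) c(7) c(9) cL cK this cQK k2]
      show "\<exists>V\<in>carrier_mat nv nw. RH_inf V \<and> V = L + L * (Pwv + Pwu * QK * Pyv) * V" .
    qed
  qed
  then show ?thesis using cQK sQK k1 k2 by blast
qed


lemma diag_Suc_Fm: "diag_mats (Suc n) f = Fm (diag_mats n f) (f n)"
  by (simp add: Fm_def Let_def)

lemma diag_carrier: "(\<And>i. i < N \<Longrightarrow> f i \<in> carrier_mat (r i) (c i)) \<Longrightarrow>
  diag_mats N f \<in> carrier_mat (\<Sum>i<N. r i) (\<Sum>i<N. c i)"
proof (induction N)
  case 0 then show ?case by simp
next
  case (Suc n)
  then show ?case unfolding diag_Suc_Fm by (simp add: Fm_carrier)
qed

lemma RH_inf_Fm: "RH_inf (Fm X Y) \<longleftrightarrow> RH_inf X \<and> RH_inf Y"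
  unfolding Fm_def by (subst RH_inf_four_block) auto

lemma diag_RH: "(\<And>i. i < N \<Longrightarrow> RH_inf (f i)) \<Longrightarrow> RH_inf (diag_mats N f)"
proof (induction N)
  case 0 then show ?case by simp
next
  case (Suc n)
  then show ?case unfolding diag_Suc_Fm by (simp add: RH_inf_Fm)
qed

lemma Fm_mult: assumes "X1 \<in> carrier_mat a1 b1" "X2 \<in> carrier_mat b1 c1" "Y1 \<in> carrier_mat a2 b2" "Y2 \<in> carrier_mat b2 c2"
  shows "Fm X1 Y1 * Fm X2 Y2 = Fm (X1 * X2) (Y1 * Y2)"
  unfolding Fm_def using assms
  by (subst mult_four_block_mat[of _ a1 b1 _ b2 _ a2 _ _ c1 _ c2]) (auto simp: madc)

lemma Fm_add: assumes "X1 \<in> carrier_mat a1 b1" "X2 \<in> carrier_mat a1 b1" "Y1 \<in> carrier_mat a2 b2" "Y2 \<in> carrier_mat a2 b2"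
  shows "Fm X1 Y1 + Fm X2 Y2 = Fm (X1 + X2) (Y1 + Y2)"
  unfolding Fm_def using assms
  by (subst add_four_block_mat[of _ a1 b1 _ b2 _ a2]) (auto simp: madc)

lemma diag_mult: "(\<And>i. i < N \<Longrightarrow> f i \<in> carrier_mat (a i) (b i)) \<Longrightarrow> (\<And>i. i < N \<Longrightarrow> g i \<in> carrier_mat (b i) (c i)) \<Longrightarrow>
  diag_mats N f * diag_mats N g = diag_mats N (\<lambda>i. f i * g i)"
proof (induction N)
  case 0 then show ?case by simp
next
  case (Suc n)
  have "diag_mats n f * diag_mats n g = diag_mats n (\<lambda>i. f i * g i)" using Suc by simp
  moreover have "diag_mats n f \<in> carrier_mat (\<Sum>i<n. a i) (\<Sum>i<n. b i)" using Suc by (intro diag_carrier) auto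
  moreover have "diag_mats n g \<in> carrier_mat (\<Sum>i<n. b i) (\<Sum>i<n. c i)" using Suc by (intro diag_carrier) auto
  ultimately show ?case unfolding diag_Suc_Fm using Suc.prems
    by (subst Fm_mult[of _ _ "\<Sum>i<n. b i" _ _ _ _ "b n"]) auto
qed

lemma diag_add: "(\<And>i. i < N \<Longrightarrow> f i \<in> carrier_mat (a i) (b i)) \<Longrightarrow> (\<And>i. i < N \<Longrightarrow> g i \<in> carrier_mat (a i) (b i)) \<Longrightarrow>
  diag_mats N f + diag_mats N g = diag_mats N (\<lambda>i. f i + g i)"
proof (induction N)
  case 0 then show ?case by simp
next
  case (Suc n)
  have "diag_mats n f + diag_mats n g = diag_mats n (\<lambda>i. f i + g i)" using Suc by simp
  moreover have "diag_mats n f \<in> carrier_mat (\<Sum>i<n. a i) (\<Sum>i<n. b i)" using Suc by (intro diag_carrier) auto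
  moreover have "diag_mats n g \<in> carrier_mat (\<Sum>i<n. a i) (\<Sum>i<n. b i)" using Suc by (intro diag_carrier) auto
  ultimately show ?case unfolding diag_Suc_Fm using Suc.prems
    by (subst Fm_add[of _ "\<Sum>i<n. a i" "\<Sum>i<n. b i" _ _ "a n" "b n"]) auto
qed

lemma diag_zero: "diag_mats N (\<lambda>i. 0\<^sub>m (a i) (b i)) = 0\<^sub>m (\<Sum>i<N. a i) (\<Sum>i<N. b i)"
proof (induction N)
  case 0 then show ?case by simp
next
  case (Suc n)
  then show ?case unfolding diag_Suc_Fm Fm_def by (simp add: Fm_def)
qed

lemma diag_cong: "(\<And>i. i < N \<Longrightarrow> f i = g i) \<Longrightarrow> diag_mats N f = diag_mats N g"
proof (induction N)
  case 0 then show ?case by simp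
next
  case (Suc n)
  then show ?case unfolding diag_Suc_Fm by simp
qed


lemma Fm_mult_4b: assumes "X \<in> carrier_mat a1 b1" "Y \<in> carrier_mat a2 b2"
  "Q1 \<in> carrier_mat b1 c1" "Q2 \<in> carrier_mat b1 c2" "Q3 \<in> carrier_mat b2 c1" "Q4 \<in> carrier_mat b2 c2"
  shows "Fm X Y * four_block_mat Q1 Q2 Q3 Q4 = four_block_mat (X * Q1) (X * Q2) (Y * Q3) (Y * Q4)"
  unfolding Fm_def using assms
  by (subst mult_four_block_mat[of _ a1 b1 _ b2 _ a2 _ _ c1 _ c2]) (auto simp: madc)

lemma mult_4b_Fm: assumes "X \<in> carrier_mat b1 c1" "Y \<in> carrier_mat b2 c2"
  "Q1 \<in> carrier_mat a1 b1" "Q2 \<in> carrier_mat a1 b2" "Q3 \<in> carrier_mat a2 b1" "Q4 \<in> carrier_mat a2 b2"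
  shows "four_block_mat Q1 Q2 Q3 Q4 * Fm X Y = four_block_mat (Q1 * X) (Q2 * Y) (Q3 * X) (Q4 * Y)"
  unfolding Fm_def using assms
  by (subst mult_four_block_mat[of _ a1 b1 _ b2 _ a2 _ _ c1 _ c2]) (auto simp: madc)

lemma Fm_add_4b: assumes "X \<in> carrier_mat a1 b1" "Y \<in> carrier_mat a2 b2"
  "Q1 \<in> carrier_mat a1 b1" "Q2 \<in> carrier_mat a1 b2" "Q3 \<in> carrier_mat a2 b1" "Q4 \<in> carrier_mat a2 b2"
  shows "Fm X Y + four_block_mat Q1 Q2 Q3 Q4 = four_block_mat (X + Q1) Q2 Q3 (Y + Q4)"
  unfolding Fm_def using assms
  by (subst add_four_block_mat[of _ a1 b1 _ b2 _ a2]) (auto simp: madc)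

lemma step_split:
  assumes c: "K1 \<in> carrier_mat a1 b1" "D1 \<in> carrier_mat b1 a1" "B1 \<in> carrier_mat w1 a1" "C1 \<in> carrier_mat b1 v1"
    "K2 \<in> carrier_mat a2 b2" "D2 \<in> carrier_mat b2 a2" "B2 \<in> carrier_mat w2 a2" "C2 \<in> carrier_mat b2 v2"
    and cQ: "Q \<in> carrier_mat (a1 + a2) (b1 + b2)" and sQ: "RH_inf Q"
    and e1: "Q = Fm K1 K2 + Fm K1 K2 * Fm D1 D2 * Q" and e2: "Q = Fm K1 K2 + Q * Fm D1 D2 * Fm K1 K2"
    and z: "Fm B1 B2 * Q * Fm C1 C2 = 0\<^sub>m (w1 + w2) (v1 + v2)"
  shows "(\<exists>Q1\<in>carrier_mat a1 b1. RH_inf Q1 \<and> Q1 = K1 + K1 * D1 * Q1 \<and> Q1 = K1 + Q1 * D1 * K1 \<and> B1 * Q1 * C1 = 0\<^sub>m w1 v1)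
       \<and> (\<exists>Q1\<in>carrier_mat a2 b2. RH_inf Q1 \<and> Q1 = K2 + K2 * D2 * Q1 \<and> Q1 = K2 + Q1 * D2 * K2 \<and> B2 * Q1 * C2 = 0\<^sub>m w2 v2)"
proof -
  obtain Q1 Q2 Q3 Q4 where sp: "split_block Q a1 b1 = (Q1,Q2,Q3,Q4)" by (metis prod_cases4)
  note sb = split_block[OF sp, of a2 b2]
  have c1: "Q1 \<in> carrier_mat a1 b1" and c2: "Q2 \<in> carrier_mat a1 b2" and c3: "Q3 \<in> carrier_mat a2 b1"
    and c4: "Q4 \<in> carrier_mat a2 b2" and Qeq: "Q = four_block_mat Q1 Q2 Q3 Q4" using sb cQ by auto
  note cc = c c1 c2 c3 c4
  have KD: "Fm K1 K2 * Fm D1 D2 = Fm (K1 * D1) (K2 * D2)" by (rule Fm_mult) (use c in auto)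
  have DK: "Fm D1 D2 * Fm K1 K2 = Fm (D1 * K1) (D2 * K2)" by (rule Fm_mult) (use c in auto)
  have "Fm K1 K2 + Fm K1 K2 * Fm D1 D2 * Q = Fm K1 K2 + four_block_mat (K1 * D1 * Q1) (K1 * D1 * Q2) (K2 * D2 * Q3) (K2 * D2 * Q4)"
    unfolding KD Qeq using cc by (subst Fm_mult_4b[of _ a1 a1 _ a2 a2]) auto
  also have "\<dots> = four_block_mat (K1 + K1 * D1 * Q1) (K1 * D1 * Q2) (K2 * D2 * Q3) (K2 + K2 * D2 * Q4)"
    using cc by (subst Fm_add_4b[of _ a1 b1 _ a2 b2]) auto
  finally have "four_block_mat Q1 Q2 Q3 Q4 = \<dots>" using e1 Qeq by simp
  from four_block_inj[OF _ _ _ _ _ _ _ _ this, of a1 b1 b2 a2] cc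
  have q1: "Q1 = K1 + K1 * D1 * Q1" and q4: "Q4 = K2 + K2 * D2 * Q4" by auto
  have "Q * Fm D1 D2 * Fm K1 K2 = Q * Fm (D1 * K1) (D2 * K2)"
    unfolding DK[symmetric] using cc cQ by (subst mad_assoc) (auto simp: Fm_def)
  also have "\<dots> = four_block_mat (Q1 * (D1 * K1)) (Q2 * (D2 * K2)) (Q3 * (D1 * K1)) (Q4 * (D2 * K2))"
    unfolding Qeq using cc by (subst mult_4b_Fm[of _ b1 b1 _ b2 b2 _ a1 _ _ a2]) auto
  finally have "Fm K1 K2 + Q * Fm D1 D2 * Fm K1 K2 = Fm K1 K2 + \<dots>" by simp
  also have "\<dots> = four_block_mat (K1 + Q1 * (D1 * K1)) (Q2 * (D2 * K2)) (Q3 * (D1 * K1)) (K2 + Q4 * (D2 * K2))"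
    using cc by (subst Fm_add_4b[of _ a1 b1 _ a2 b2]) auto
  finally have "four_block_mat Q1 Q2 Q3 Q4 = \<dots>" using e2 Qeq by simp
  from four_block_inj[OF _ _ _ _ _ _ _ _ this, of a1 b1 b2 a2] cc
  have q1': "Q1 = K1 + Q1 * D1 * K1" and q4': "Q4 = K2 + Q4 * D2 * K2" by (auto simp: madc)
  have "Fm B1 B2 * Q * Fm C1 C2 = Fm B1 B2 * (Q * Fm C1 C2)"
    using cc cQ by (subst mad_assoc) (auto simp: Fm_def)
  also have "\<dots> = Fm B1 B2 * four_block_mat (Q1 * C1) (Q2 * C2) (Q3 * C1) (Q4 * C2)"
    unfolding Qeq using cc by (subst mult_4b_Fm[of _ b1 v1 _ b2 v2 _ a1 _ _ a2]) auto
  also have "\<dots> = four_block_mat (B1 * (Q1 * C1)) (B1 * (Q2 * C2)) (B2 * (Q3 * C1)) (B2 * (Q4 * C2))"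
    using cc by (subst Fm_mult_4b[of _ w1 a1 _ w2 a2 _ v1 _ v2]) auto
  finally have "four_block_mat (B1 * (Q1 * C1)) (B1 * (Q2 * C2)) (B2 * (Q3 * C1)) (B2 * (Q4 * C2))
     = four_block_mat (0\<^sub>m w1 v1) (0\<^sub>m w1 v2) (0\<^sub>m w2 v1) (0\<^sub>m w2 v2)" using z by simp
  from four_block_inj[OF _ _ _ _ _ _ _ _ this, of w1 v1 v2 w2] cc
  have z1: "B1 * Q1 * C1 = 0\<^sub>m w1 v1" and z4: "B2 * Q4 * C2 = 0\<^sub>m w2 v2" by (auto simp: madc)
  have "RH_inf Q1" "RH_inf Q4" using sQ unfolding Qeq using cc by (simp_all add: RH_inf_four_block)
  then show ?thesis using c1 c4 q1 q1' q4 q4' z1 z4 by blast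
qed


lemma diag_extract:
  assumes c: "\<And>i. i < N \<Longrightarrow> K i \<in> carrier_mat (nu i) (ny i)" "\<And>i. i < N \<Longrightarrow> D i \<in> carrier_mat (ny i) (nu i)"
    "\<And>i. i < N \<Longrightarrow> B i \<in> carrier_mat (nw i) (nu i)" "\<And>i. i < N \<Longrightarrow> C i \<in> carrier_mat (ny i) (nv i)"
    and cQ: "Q \<in> carrier_mat (\<Sum>i<N. nu i) (\<Sum>i<N. ny i)" and sQ: "RH_inf Q"
    and e1: "Q = diag_mats N K + diag_mats N K * diag_mats N D * Q"
    and e2: "Q = diag_mats N K + Q * diag_mats N D * diag_mats N K"
    and z: "diag_mats N B * Q * diag_mats N C = 0\<^sub>m (\<Sum>i<N. nw i) (\<Sum>i<N. nv i)"
  shows "\<forall>i<N. \<exists>Qi\<in>carrier_mat (nu i) (ny i). RH_inf Qi \<and> Qi = K i + K i * D i * Qi \<and> Qi = K i + Qi * D i * K i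
     \<and> B i * Qi * C i = 0\<^sub>m (nw i) (nv i)"
  using assms
proof (induction N arbitrary: Q)
  case 0 then show ?case by simp
next
  case (Suc n)
  have cK: "diag_mats n K \<in> carrier_mat (\<Sum>i<n. nu i) (\<Sum>i<n. ny i)" using Suc.prems by (intro diag_carrier) auto
  have cD: "diag_mats n D \<in> carrier_mat (\<Sum>i<n. ny i) (\<Sum>i<n. nu i)" using Suc.prems by (intro diag_carrier) auto
  have cB: "diag_mats n B \<in> carrier_mat (\<Sum>i<n. nw i) (\<Sum>i<n. nu i)" using Suc.prems by (intro diag_carrier) auto
  have cC: "diag_mats n C \<in> carrier_mat (\<Sum>i<n. ny i) (\<Sum>i<n. nv i)" using Suc.prems by (intro diag_carrier) auto
  have "(\<exists>Q1\<in>carrier_mat (\<Sum>i<n. nu i) (\<Sum>i<n. ny i). RH_inf Q1 \<and> Q1 = diag_mats n K + diag_mats n K * diag_mats n D * Q1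
       \<and> Q1 = diag_mats n K + Q1 * diag_mats n D * diag_mats n K \<and> diag_mats n B * Q1 * diag_mats n C = 0\<^sub>m (\<Sum>i<n. nw i) (\<Sum>i<n. nv i))
     \<and> (\<exists>Q1\<in>carrier_mat (nu n) (ny n). RH_inf Q1 \<and> Q1 = K n + K n * D n * Q1 \<and> Q1 = K n + Q1 * D n * K n
       \<and> B n * Q1 * C n = 0\<^sub>m (nw n) (nv n))"
  proof -
    have P: "Q \<in> carrier_mat ((\<Sum>i<n. nu i) + nu n) ((\<Sum>i<n. ny i) + ny n)" "RH_inf Q"
      "Q = Fm (diag_mats n K) (K n) + Fm (diag_mats n K) (K n) * Fm (diag_mats n D) (D n) * Q"
      "Q = Fm (diag_mats n K) (K n) + Q * Fm (diag_mats n D) (D n) * Fm (diag_mats n K) (K n)"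
      "Fm (diag_mats n B) (B n) * Q * Fm (diag_mats n C) (C n) = 0\<^sub>m ((\<Sum>i<n. nw i) + nw n) ((\<Sum>i<n. nv i) + nv n)"
      using Suc.prems(5-9) unfolding diag_Suc_Fm by (simp_all only: sum.lessThan_Suc)
    have cn: "K n \<in> carrier_mat (nu n) (ny n)" "D n \<in> carrier_mat (ny n) (nu n)"
      "B n \<in> carrier_mat (nw n) (nu n)" "C n \<in> carrier_mat (ny n) (nv n)" using Suc.prems(1-4) by auto
    show ?thesis by (rule step_split[OF cK cD cB cC cn P])
  qed
  then obtain Q1 where q1: "Q1\<in>carrier_mat (\<Sum>i<n. nu i) (\<Sum>i<n. ny i)" "RH_inf Q1"
      "Q1 = diag_mats n K + diag_mats n K * diag_mats n D * Q1"
      "Q1 = diag_mats n K + Q1 * diag_mats n D * diag_mats n K"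
      "diag_mats n B * Q1 * diag_mats n C = 0\<^sub>m (\<Sum>i<n. nw i) (\<Sum>i<n. nv i)"
    and last: "\<exists>Q1\<in>carrier_mat (nu n) (ny n). RH_inf Q1 \<and> Q1 = K n + K n * D n * Q1 \<and> Q1 = K n + Q1 * D n * K n
       \<and> B n * Q1 * C n = 0\<^sub>m (nw n) (nv n)" by blast
  have IH: "\<forall>i<n. \<exists>Qi\<in>carrier_mat (nu i) (ny i). RH_inf Qi \<and> Qi = K i + K i * D i * Qi \<and> Qi = K i + Qi * D i * K i
     \<and> B i * Qi * C i = 0\<^sub>m (nw i) (nv i)"
    by (rule Suc.IH[OF _ _ _ _ q1]) (use Suc.prems in auto)
  show ?case
  proof (intro allI impI)
    fix i assume "i < Suc n"
    then consider "i < n" | "i = n" by linarith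
    then show "\<exists>Qi\<in>carrier_mat (nu i) (ny i). RH_inf Qi \<and> Qi = K i + K i * D i * Qi \<and> Qi = K i + Qi * D i * K i
     \<and> B i * Qi * C i = 0\<^sub>m (nw i) (nv i)"
      using IH last by cases auto
  qed
qed

lemma diag_build:
  assumes c: "\<And>i. i < N \<Longrightarrow> K i \<in> carrier_mat (nu i) (ny i)" "\<And>i. i < N \<Longrightarrow> D i \<in> carrier_mat (ny i) (nu i)"
    "\<And>i. i < N \<Longrightarrow> B i \<in> carrier_mat (nw i) (nu i)" "\<And>i. i < N \<Longrightarrow> C i \<in> carrier_mat (ny i) (nv i)"
    and Q: "\<And>i. i < N \<Longrightarrow> Qs i \<in> carrier_mat (nu i) (ny i) \<and> RH_inf (Qs i) \<and> Qs i = K i + K i * D i * Qs i \<and>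
       Qs i = K i + Qs i * D i * K i \<and> B i * Qs i * C i = 0\<^sub>m (nw i) (nv i)"
  shows "diag_mats N Qs \<in> carrier_mat (\<Sum>i<N. nu i) (\<Sum>i<N. ny i)" "RH_inf (diag_mats N Qs)"
    "diag_mats N Qs = diag_mats N K + diag_mats N K * diag_mats N D * diag_mats N Qs"
    "diag_mats N Qs = diag_mats N K + diag_mats N Qs * diag_mats N D * diag_mats N K"
    "diag_mats N B * diag_mats N Qs * diag_mats N C = 0\<^sub>m (\<Sum>i<N. nw i) (\<Sum>i<N. nv i)"
proof -
  show "diag_mats N Qs \<in> carrier_mat (\<Sum>i<N. nu i) (\<Sum>i<N. ny i)" using Q by (intro diag_carrier) auto
  show "RH_inf (diag_mats N Qs)" using Q by (intro diag_RH) auto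
  have cQ': "\<And>i. i < N \<Longrightarrow> Qs i \<in> carrier_mat (nu i) (ny i)" using Q by blast
  have cKD: "\<And>i. i < N \<Longrightarrow> K i * D i \<in> carrier_mat (nu i) (nu i)" by (metis c(1) c(2) mult_carrier_mat)
  have cQD: "\<And>i. i < N \<Longrightarrow> Qs i * D i \<in> carrier_mat (nu i) (nu i)" by (metis cQ' c(2) mult_carrier_mat)
  have cBQ: "\<And>i. i < N \<Longrightarrow> B i * Qs i \<in> carrier_mat (nw i) (ny i)" by (metis cQ' c(3) mult_carrier_mat)
  have cKDQ: "\<And>i. i < N \<Longrightarrow> K i * D i * Qs i \<in> carrier_mat (nu i) (ny i)" by (metis cKD cQ' mult_carrier_mat)
  have cQDK: "\<And>i. i < N \<Longrightarrow> Qs i * D i * K i \<in> carrier_mat (nu i) (ny i)" by (metis cQD c(1) mult_carrier_mat)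
  have KD: "diag_mats N K * diag_mats N D = diag_mats N (\<lambda>i. K i * D i)"
    by (rule diag_mult[of N K nu ny D nu]) (use c in auto)
  have KDQ: "diag_mats N (\<lambda>i. K i * D i) * diag_mats N Qs = diag_mats N (\<lambda>i. K i * D i * Qs i)"
    by (rule diag_mult[of N _ nu nu Qs ny]) (use c cKD cQD cBQ cQ' cKDQ cQDK in auto)
  have "diag_mats N K + diag_mats N K * diag_mats N D * diag_mats N Qs = diag_mats N (\<lambda>i. K i + K i * D i * Qs i)"
    unfolding KD KDQ by (rule diag_add[of N _ nu ny]) (use c cKD cQD cBQ cQ' cKDQ cQDK in auto)
  also have "\<dots> = diag_mats N Qs" using Q by (intro diag_cong) auto
  finally show "diag_mats N Qs = diag_mats N K + diag_mats N K * diag_mats N D * diag_mats N Qs" by simp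
  have QD: "diag_mats N Qs * diag_mats N D = diag_mats N (\<lambda>i. Qs i * D i)"
    by (rule diag_mult[of N Qs nu ny D nu]) (use c cKD cQD cBQ cQ' cKDQ cQDK in auto)
  have QDK: "diag_mats N (\<lambda>i. Qs i * D i) * diag_mats N K = diag_mats N (\<lambda>i. Qs i * D i * K i)"
    by (rule diag_mult[of N _ nu nu K ny]) (use c cKD cQD cBQ cQ' cKDQ cQDK in auto)
  have "diag_mats N K + diag_mats N Qs * diag_mats N D * diag_mats N K = diag_mats N (\<lambda>i. K i + Qs i * D i * K i)"
    unfolding QD QDK by (rule diag_add[of N _ nu ny]) (use c cKD cQD cBQ cQ' cKDQ cQDK in auto)
  also have "\<dots> = diag_mats N Qs" using Q by (intro diag_cong) auto
  finally show "diag_mats N Qs = diag_mats N K + diag_mats N Qs * diag_mats N D * diag_mats N K" by simp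
  have BQ: "diag_mats N B * diag_mats N Qs = diag_mats N (\<lambda>i. B i * Qs i)"
    by (rule diag_mult[of N B nw nu Qs ny]) (use c cKD cQD cBQ cQ' cKDQ cQDK in auto)
  have BQC: "diag_mats N (\<lambda>i. B i * Qs i) * diag_mats N C = diag_mats N (\<lambda>i. B i * Qs i * C i)"
    by (rule diag_mult[of N _ nw ny C nv]) (use c cKD cQD cBQ cQ' cKDQ cQDK in auto)
  have "diag_mats N (\<lambda>i. B i * Qs i * C i) = diag_mats N (\<lambda>i. 0\<^sub>m (nw i) (nv i))" using Q by (intro diag_cong) auto
  then show "diag_mats N B * diag_mats N Qs * diag_mats N C = 0\<^sub>m (\<Sum>i<N. nw i) (\<Sum>i<N. nv i)"
    unfolding BQ BQC diag_zero .
qed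


lemma blocks_carrier[simp]:
  "Gwv nw nz ny nv nd nu G \<in> carrier_mat nw nv" "Gwd nw nz ny nv nd nu G \<in> carrier_mat nw nd"
  "Gwu nw nz ny nv nd nu G \<in> carrier_mat nw nu" "Gzv nw nz ny nv nd nu G \<in> carrier_mat nz nv"
  "Gzd nw nz ny nv nd nu G \<in> carrier_mat nz nd" "Gzu nw nz ny nv nd nu G \<in> carrier_mat nz nu"
  "Gyv nw nz ny nv nd nu G \<in> carrier_mat ny nv" "Gyd nw nz ny nv nd nu G \<in> carrier_mat ny nd"
  "Gyu nw nz ny nv nd nu G \<in> carrier_mat ny nu"
  unfolding Gwv_def Gwd_def Gwu_def Gzv_def Gzd_def Gzu_def Gyv_def Gyd_def Gyu_def by simp_all

lemma blocks_RH:
  assumes "G \<in> carrier_mat (nw + nz + ny) (nv + nd + nu)" "RH_inf G"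
  shows "RH_inf (Gwv nw nz ny nv nd nu G)" "RH_inf (Gwd nw nz ny nv nd nu G)"
  "RH_inf (Gwu nw nz ny nv nd nu G)" "RH_inf (Gzv nw nz ny nv nd nu G)"
  "RH_inf (Gzd nw nz ny nv nd nu G)" "RH_inf (Gzu nw nz ny nv nd nu G)"
  "RH_inf (Gyv nw nz ny nv nd nu G)" "RH_inf (Gyd nw nz ny nv nd nu G)"
  "RH_inf (Gyu nw nz ny nv nd nu G)"
  unfolding Gwv_def Gwd_def Gwu_def Gzv_def Gzd_def Gzu_def Gyv_def Gyd_def Gyu_def
  using assms by (auto intro!: RH_inf_blk)

lemma local_iff:
  assumes cG: "G \<in> carrier_mat (nw + nz + ny) (nv + nd + nu)" and sG: "RH_inf G" and cK: "K \<in> carrier_mat nu ny"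
  shows "retrofit nw nz ny nv nd nu G K \<longleftrightarrow>
    (\<exists>QK \<in> carrier_mat nu ny. RH_inf QK \<and> QK = K + K * Gyu nw nz ny nv nd nu G * QK
       \<and> QK = K + QK * Gyu nw nz ny nv nd nu G * K
       \<and> Gwu nw nz ny nv nd nu G * QK * Gyv nw nz ny nv nd nu G = 0\<^sub>m nw nv)"
proof -
  note bR = blocks_RH[OF cG sG]
  show ?thesis
proof
  assume "retrofit nw nz ny nv nd nu G K"
  then show "\<exists>QK \<in> carrier_mat nu ny. RH_inf QK \<and> QK = K + K * Gyu nw nz ny nv nd nu G * QK
       \<and> QK = K + QK * Gyu nw nz ny nv nd nu G * K
       \<and> Gwu nw nz ny nv nd nu G * QK * Gyv nw nz ny nv nd nu G = 0\<^sub>m nw nv"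
    unfolding retrofit_def
    by (intro lemmaD[OF blocks_carrier[of nw nz ny nv nd nu G] bR(2) bR(8) bR(4) bR(6) bR(5) bR(1) bR(3) bR(7) bR(9) cK]) blast
next
  assume "\<exists>QK \<in> carrier_mat nu ny. RH_inf QK \<and> QK = K + K * Gyu nw nz ny nv nd nu G * QK
       \<and> QK = K + QK * Gyu nw nz ny nv nd nu G * K
       \<and> Gwu nw nz ny nv nd nu G * QK * Gyv nw nz ny nv nd nu G = 0\<^sub>m nw nv"
  then obtain QK where q: "QK \<in> carrier_mat nu ny" "RH_inf QK" "QK = K + K * Gyu nw nz ny nv nd nu G * QK"
       "QK = K + QK * Gyu nw nz ny nv nd nu G * K"
       "Gwu nw nz ny nv nd nu G * QK * Gyv nw nz ny nv nd nu G = 0\<^sub>m nw nv" by blast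
  show "retrofit nw nz ny nv nd nu G K" unfolding retrofit_def
    using lemmaC[OF blocks_carrier[of nw nz ny nv nd nu G] bR(2) bR(8) bR(4) bR(6) bR(5) bR(1) bR(3) bR(7) bR(9) _ cK _ q] by blast
qed
qed

lemma youla_iff:
  assumes cD: "D \<in> carrier_mat ny nu" and cK: "K \<in> carrier_mat nu ny" and cB: "B \<in> carrier_mat nw nu"
    and cC: "C \<in> carrier_mat ny nv"
  shows "(\<exists>QK \<in> carrier_mat nu ny. RH_inf QK \<and> QK = K + K * D * QK \<and> QK = K + QK * D * K \<and> B * QK * C = 0\<^sub>m nw nv)
    \<longleftrightarrow> (\<exists>Q M. Q \<in> carrier_mat nu ny \<and> RH_inf Q \<and> M \<in> carrier_mat nu nu
          \<and> M * (1\<^sub>m nu + Q * D) = 1\<^sub>m nu \<and> (1\<^sub>m nu + Q * D) * M = 1\<^sub>m nu \<and> K = M * Q \<and> B * Q * C = 0\<^sub>m nw nv)"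
proof
  assume "\<exists>QK \<in> carrier_mat nu ny. RH_inf QK \<and> QK = K + K * D * QK \<and> QK = K + QK * D * K \<and> B * QK * C = 0\<^sub>m nw nv"
  then obtain Q where cQ: "Q \<in> carrier_mat nu ny" and sQ: "RH_inf Q" and k1: "Q = K + K * D * Q"
    and k2: "Q = K + Q * D * K" and z: "B * Q * C = 0\<^sub>m nw nv" by blast
  define M where "M = 1\<^sub>m nu + - (K * D)"
  have cM: "M \<in> carrier_mat nu nu" unfolding M_def using cK cD by auto
  have z1: "Q + - K + - (K * D * Q) = 0\<^sub>m nu ny" by (subst (1) k1) (use cK cD cQ in \<open>simp add: madc\<close>)
  have z2: "Q + - K + - (Q * D * K) = 0\<^sub>m nu ny" by (subst (1) k2) (use cK cD cQ in \<open>simp add: madc\<close>)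
  have "M * (1\<^sub>m nu + Q * D) = 1\<^sub>m nu + (Q + - K + - (K * D * Q)) * D"
    unfolding M_def using cK cD cQ by (simp add: madc)
  then have m1: "M * (1\<^sub>m nu + Q * D) = 1\<^sub>m nu" using z1 cD by simp
  have "(1\<^sub>m nu + Q * D) * M = 1\<^sub>m nu + (Q + - K + - (Q * D * K)) * D"
    unfolding M_def using cK cD cQ by (simp add: madc)
  then have m2: "(1\<^sub>m nu + Q * D) * M = 1\<^sub>m nu" using z2 cD by simp
  have "M * Q = Q + - (K * D * Q)" unfolding M_def using cK cD cQ by (simp add: madc)
  also have "\<dots> = (K + K * D * Q) + - (K * D * Q)" using k1 by simp
  also have "\<dots> = K" using cK cD cQ by (simp add: madc)
  finally have "K = M * Q" by simp
  then show "\<exists>Q M. Q \<in> carrier_mat nu ny \<and> RH_inf Q \<and> M \<in> carrier_mat nu nu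
          \<and> M * (1\<^sub>m nu + Q * D) = 1\<^sub>m nu \<and> (1\<^sub>m nu + Q * D) * M = 1\<^sub>m nu \<and> K = M * Q \<and> B * Q * C = 0\<^sub>m nw nv"
    using cQ sQ cM m1 m2 z by blast
next
  assume "\<exists>Q M. Q \<in> carrier_mat nu ny \<and> RH_inf Q \<and> M \<in> carrier_mat nu nu
          \<and> M * (1\<^sub>m nu + Q * D) = 1\<^sub>m nu \<and> (1\<^sub>m nu + Q * D) * M = 1\<^sub>m nu \<and> K = M * Q \<and> B * Q * C = 0\<^sub>m nw nv"
  then obtain Q M where cQ: "Q \<in> carrier_mat nu ny" and sQ: "RH_inf Q" and cM: "M \<in> carrier_mat nu nu"
    and m1: "M * (1\<^sub>m nu + Q * D) = 1\<^sub>m nu" and m2: "(1\<^sub>m nu + Q * D) * M = 1\<^sub>m nu"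
    and KM: "K = M * Q" and z: "B * Q * C = 0\<^sub>m nw nv" by blast
  have "K + Q * D * K = (1\<^sub>m nu + Q * D) * M * Q" unfolding KM using cQ cM cD by (simp add: madc)
  also have "\<dots> = Q" using m2 cQ by simp
  finally have k2: "Q = K + Q * D * K" by simp
  have "K + K * D * Q = M * (1\<^sub>m nu + Q * D) * Q" unfolding KM using cQ cM cD by (simp add: madc)
  also have "\<dots> = Q" using m1 cQ by simp
  finally have k1: "Q = K + K * D * Q" by simp
  show "\<exists>QK \<in> carrier_mat nu ny. RH_inf QK \<and> QK = K + K * D * QK \<and> QK = K + QK * D * K \<and> B * QK * C = 0\<^sub>m nw nv"
    using cQ sQ k1 k2 z by blast
qed


theorem theorem3:
  fixes N :: nat and nw nz ny nv nd nu :: "nat \<Rightarrow> nat"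
    and G K :: "nat \<Rightarrow> tf mat"
  assumes G_dim: "\<forall>i<N. G i \<in> carrier_mat (nw i + nz i + ny i) (nv i + nd i + nu i)"
    and G_stable: "\<forall>i<N. RH_inf (G i)"
    and K_dim: "\<forall>i<N. K i \<in> carrier_mat (nu i) (ny i)"
    and K_proper: "\<forall>i<N. proper_mat (K i)"
  shows "((\<forall>L. L \<in> carrier_mat (\<Sum>i<N. nv i) (\<Sum>i<N. nw i) \<and> proper_mat L
              \<and> pre_stable N nw nz ny nv nd nu G L
              \<longrightarrow> network_stable N nw nz ny nv nd nu G K L)
          \<longleftrightarrow> (\<forall>i<N. retrofit (nw i) (nz i) (ny i) (nv i) (nd i) (nu i) (G i) (K i)))
       \<and> ((\<forall>i<N. retrofit (nw i) (nz i) (ny i) (nv i) (nd i) (nu i) (G i) (K i))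
          \<longleftrightarrow> (\<forall>i<N. \<exists>Q M. Q \<in> carrier_mat (nu i) (ny i) \<and> RH_inf Q
                 \<and> M \<in> carrier_mat (nu i) (nu i)
                 \<and> M * (1\<^sub>m (nu i) + Q * Gyu (nw i) (nz i) (ny i) (nv i) (nd i) (nu i) (G i)) = 1\<^sub>m (nu i)
                 \<and> (1\<^sub>m (nu i) + Q * Gyu (nw i) (nz i) (ny i) (nv i) (nd i) (nu i) (G i)) * M = 1\<^sub>m (nu i)
                 \<and> K i = M * Q
                 \<and> Gwu (nw i) (nz i) (ny i) (nv i) (nd i) (nu i) (G i) * Q
                     * Gyv (nw i) (nz i) (ny i) (nv i) (nd i) (nu i) (G i) = 0\<^sub>m (nw i) (nv i)))"
proof -
  define Bl where "Bl X i = X (nw i) (nz i) (ny i) (nv i) (nd i) (nu i) (G i)" for X :: "nat \<Rightarrow> nat \<Rightarrow> nat \<Rightarrow> nat \<Rightarrow> nat \<Rightarrow> nat \<Rightarrow> tf mat \<Rightarrow> tf mat" and i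
  define Y where "Y i = (\<exists>QK \<in> carrier_mat (nu i) (ny i). RH_inf QK \<and> QK = K i + K i * Bl Gyu i * QK
       \<and> QK = K i + QK * Bl Gyu i * K i \<and> Bl Gwu i * QK * Bl Gyv i = 0\<^sub>m (nw i) (nv i))" for i
  have LOC: "retrofit (nw i) (nz i) (ny i) (nv i) (nd i) (nu i) (G i) (K i) \<longleftrightarrow> Y i" if "i < N" for i
  proof -
    have h: "G i \<in> carrier_mat (nw i + nz i + ny i) (nv i + nd i + nu i)" "RH_inf (G i)" "K i \<in> carrier_mat (nu i) (ny i)"
      using G_dim G_stable K_dim that by auto
    show ?thesis unfolding Y_def Bl_def by (rule local_iff[OF h])
  qed
  have YOU: "Y i \<longleftrightarrow> (\<exists>Q M. Q \<in> carrier_mat (nu i) (ny i) \<and> RH_inf Q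
                 \<and> M \<in> carrier_mat (nu i) (nu i)
                 \<and> M * (1\<^sub>m (nu i) + Q * Gyu (nw i) (nz i) (ny i) (nv i) (nd i) (nu i) (G i)) = 1\<^sub>m (nu i)
                 \<and> (1\<^sub>m (nu i) + Q * Gyu (nw i) (nz i) (ny i) (nv i) (nd i) (nu i) (G i)) * M = 1\<^sub>m (nu i)
                 \<and> K i = M * Q
                 \<and> Gwu (nw i) (nz i) (ny i) (nv i) (nd i) (nu i) (G i) * Q
                     * Gyv (nw i) (nz i) (ny i) (nv i) (nd i) (nu i) (G i) = 0\<^sub>m (nw i) (nv i))" if "i < N" for i
    unfolding Y_def Bl_def by (rule youla_iff) (use K_dim that in auto)
  have part2: "(\<forall>i<N. retrofit (nw i) (nz i) (ny i) (nv i) (nd i) (nu i) (G i) (K i))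
          \<longleftrightarrow> (\<forall>i<N. \<exists>Q M. Q \<in> carrier_mat (nu i) (ny i) \<and> RH_inf Q
                 \<and> M \<in> carrier_mat (nu i) (nu i)
                 \<and> M * (1\<^sub>m (nu i) + Q * Gyu (nw i) (nz i) (ny i) (nv i) (nd i) (nu i) (G i)) = 1\<^sub>m (nu i)
                 \<and> (1\<^sub>m (nu i) + Q * Gyu (nw i) (nz i) (ny i) (nv i) (nd i) (nu i) (G i)) * M = 1\<^sub>m (nu i)
                 \<and> K i = M * Q
                 \<and> Gwu (nw i) (nz i) (ny i) (nv i) (nd i) (nu i) (G i) * Q
                     * Gyv (nw i) (nz i) (ny i) (nv i) (nd i) (nu i) (G i) = 0\<^sub>m (nw i) (nv i))"
    using LOC YOU by blast
  have dG: "diagG N nw nz ny nv nd nu G X = diag_mats N (Bl X)" for X unfolding diagG_def Bl_def by simp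
  have cN: "diagG N nw nz ny nv nd nu G X \<in> carrier_mat (\<Sum>i<N. r i) (\<Sum>i<N. c i)"
    if "\<And>i. i < N \<Longrightarrow> Bl X i \<in> carrier_mat (r i) (c i)" for X r c
    unfolding dG by (rule diag_carrier) (use that in auto)
  have sN: "RH_inf (diagG N nw nz ny nv nd nu G X)" if "\<And>i. i < N \<Longrightarrow> RH_inf (Bl X i)" for X
    unfolding dG by (rule diag_RH) (use that in auto)
  have bR: "RH_inf (Bl Gwv i)" "RH_inf (Bl Gwd i)" "RH_inf (Bl Gwu i)" "RH_inf (Bl Gzv i)" "RH_inf (Bl Gzd i)"
    "RH_inf (Bl Gzu i)" "RH_inf (Bl Gyv i)" "RH_inf (Bl Gyd i)" "RH_inf (Bl Gyu i)" if "i < N" for i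
    unfolding Bl_def using blocks_RH[of "G i"] G_dim G_stable that by auto
  have bC: "Bl Gwv i \<in> carrier_mat (nw i) (nv i)" "Bl Gwd i \<in> carrier_mat (nw i) (nd i)"
    "Bl Gwu i \<in> carrier_mat (nw i) (nu i)" "Bl Gzv i \<in> carrier_mat (nz i) (nv i)"
    "Bl Gzd i \<in> carrier_mat (nz i) (nd i)" "Bl Gzu i \<in> carrier_mat (nz i) (nu i)"
    "Bl Gyv i \<in> carrier_mat (ny i) (nv i)" "Bl Gyd i \<in> carrier_mat (ny i) (nd i)"
    "Bl Gyu i \<in> carrier_mat (ny i) (nu i)" for i
    unfolding Bl_def by simp_all
  have nc: "diagG N nw nz ny nv nd nu G Gwv \<in> carrier_mat (\<Sum>i<N. nw i) (\<Sum>i<N. nv i)"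
    "diagG N nw nz ny nv nd nu G Gwd \<in> carrier_mat (\<Sum>i<N. nw i) (\<Sum>i<N. nd i)"
    "diagG N nw nz ny nv nd nu G Gwu \<in> carrier_mat (\<Sum>i<N. nw i) (\<Sum>i<N. nu i)"
    "diagG N nw nz ny nv nd nu G Gzv \<in> carrier_mat (\<Sum>i<N. nz i) (\<Sum>i<N. nv i)"
    "diagG N nw nz ny nv nd nu G Gzd \<in> carrier_mat (\<Sum>i<N. nz i) (\<Sum>i<N. nd i)"
    "diagG N nw nz ny nv nd nu G Gzu \<in> carrier_mat (\<Sum>i<N. nz i) (\<Sum>i<N. nu i)"
    "diagG N nw nz ny nv nd nu G Gyv \<in> carrier_mat (\<Sum>i<N. ny i) (\<Sum>i<N. nv i)"
    "diagG N nw nz ny nv nd nu G Gyd \<in> carrier_mat (\<Sum>i<N. ny i) (\<Sum>i<N. nd i)"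
    "diagG N nw nz ny nv nd nu G Gyu \<in> carrier_mat (\<Sum>i<N. ny i) (\<Sum>i<N. nu i)"
    by (rule cN, rule bC)+
  have ns: "RH_inf (diagG N nw nz ny nv nd nu G Gwd)" "RH_inf (diagG N nw nz ny nv nd nu G Gyd)"
    "RH_inf (diagG N nw nz ny nv nd nu G Gzv)" "RH_inf (diagG N nw nz ny nv nd nu G Gzu)"
    "RH_inf (diagG N nw nz ny nv nd nu G Gzd)" "RH_inf (diagG N nw nz ny nv nd nu G Gwv)"
    "RH_inf (diagG N nw nz ny nv nd nu G Gwu)" "RH_inf (diagG N nw nz ny nv nd nu G Gyv)"
    "RH_inf (diagG N nw nz ny nv nd nu G Gyu)"
    by (rule sN, erule bR)+
  have nK: "diag_mats N K \<in> carrier_mat (\<Sum>i<N. nu i) (\<Sum>i<N. ny i)"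
    by (rule diag_carrier) (use K_dim in auto)
  have part1: "(\<forall>L. L \<in> carrier_mat (\<Sum>i<N. nv i) (\<Sum>i<N. nw i) \<and> proper_mat L
              \<and> pre_stable N nw nz ny nv nd nu G L
              \<longrightarrow> network_stable N nw nz ny nv nd nu G K L)
          \<longleftrightarrow> (\<forall>i<N. retrofit (nw i) (nz i) (ny i) (nv i) (nd i) (nu i) (G i) (K i))"
  proof
    assume A: "\<forall>L. L \<in> carrier_mat (\<Sum>i<N. nv i) (\<Sum>i<N. nw i) \<and> proper_mat L
              \<and> pre_stable N nw nz ny nv nd nu G L
              \<longrightarrow> network_stable N nw nz ny nv nd nu G K L"
    have "\<exists>QK \<in> carrier_mat (\<Sum>i<N. nu i) (\<Sum>i<N. ny i). RH_inf QK
       \<and> QK = diag_mats N K + diag_mats N K * diagG N nw nz ny nv nd nu G Gyu * QK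
       \<and> QK = diag_mats N K + QK * diagG N nw nz ny nv nd nu G Gyu * diag_mats N K
       \<and> diagG N nw nz ny nv nd nu G Gwu * QK * diagG N nw nz ny nv nd nu G Gyv = 0\<^sub>m (\<Sum>i<N. nw i) (\<Sum>i<N. nv i)"
      by (rule lemmaD[OF nc ns nK]) (use A in \<open>auto simp: pre_stable_def network_stable_def\<close>)
    then obtain QK where "QK \<in> carrier_mat (\<Sum>i<N. nu i) (\<Sum>i<N. ny i)" "RH_inf QK"
       "QK = diag_mats N K + diag_mats N K * diag_mats N (Bl Gyu) * QK"
       "QK = diag_mats N K + QK * diag_mats N (Bl Gyu) * diag_mats N K"
       "diag_mats N (Bl Gwu) * QK * diag_mats N (Bl Gyv) = 0\<^sub>m (\<Sum>i<N. nw i) (\<Sum>i<N. nv i)"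
      unfolding dG by blast
    from diag_extract[of N K nu ny "Bl Gyu" "Bl Gwu" nw "Bl Gyv" nv, OF _ _ _ _ this]
    have "\<forall>i<N. Y i" unfolding Y_def using K_dim bC by auto
    then show "\<forall>i<N. retrofit (nw i) (nz i) (ny i) (nv i) (nd i) (nu i) (G i) (K i)" using LOC by blast
  next
    assume "\<forall>i<N. retrofit (nw i) (nz i) (ny i) (nv i) (nd i) (nu i) (G i) (K i)"
    then have "\<forall>i<N. Y i" using LOC by blast
    then have "\<forall>i. \<exists>Q. i < N \<longrightarrow> (Q \<in> carrier_mat (nu i) (ny i) \<and> RH_inf Q \<and> Q = K i + K i * Bl Gyu i * Q
       \<and> Q = K i + Q * Bl Gyu i * K i \<and> Bl Gwu i * Q * Bl Gyv i = 0\<^sub>m (nw i) (nv i))"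
      unfolding Y_def by blast
    then obtain Qs where Qs: "\<forall>i. i < N \<longrightarrow> (Qs i \<in> carrier_mat (nu i) (ny i) \<and> RH_inf (Qs i) \<and> Qs i = K i + K i * Bl Gyu i * Qs i
       \<and> Qs i = K i + Qs i * Bl Gyu i * K i \<and> Bl Gwu i * Qs i * Bl Gyv i = 0\<^sub>m (nw i) (nv i))"
      by (metis choice)
    note db = diag_build[of N K nu ny "Bl Gyu" "Bl Gwu" nw "Bl Gyv" nv Qs]
    have d1: "diag_mats N Qs \<in> carrier_mat (\<Sum>i<N. nu i) (\<Sum>i<N. ny i)" and d2: "RH_inf (diag_mats N Qs)"
      and d3: "diag_mats N Qs = diag_mats N K + diag_mats N K * diag_mats N (Bl Gyu) * diag_mats N Qs"
      and d4: "diag_mats N Qs = diag_mats N K + diag_mats N Qs * diag_mats N (Bl Gyu) * diag_mats N K"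
      and d5: "diag_mats N (Bl Gwu) * diag_mats N Qs * diag_mats N (Bl Gyv) = 0\<^sub>m (\<Sum>i<N. nw i) (\<Sum>i<N. nv i)"
      using db K_dim bC Qs by auto
    show "\<forall>L. L \<in> carrier_mat (\<Sum>i<N. nv i) (\<Sum>i<N. nw i) \<and> proper_mat L
              \<and> pre_stable N nw nz ny nv nd nu G L
              \<longrightarrow> network_stable N nw nz ny nv nd nu G K L"
    proof (intro allI impI, elim conjE)
      fix L assume cL: "L \<in> carrier_mat (\<Sum>i<N. nv i) (\<Sum>i<N. nw i)" and "proper_mat L"
        and ps: "pre_stable N nw nz ny nv nd nu G L"
      show "network_stable N nw nz ny nv nd nu G K L" unfolding network_stable_def
        by (rule lemmaC[OF nc ns cL nK ps[unfolded pre_stable_def] d1 d2 d3[folded dG] d4[folded dG] d5[folded dG]])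
    qed
  qed
  show ?thesis using part1 part2 by blast
qed


end
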